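(* Let $r\ge 2$ be a prime and $G$ a finite group with $s$ conjugacy classes, exactly $d$ of which are not $r$-th powers in $G$. Then the number $\mathcal{CC}_r(G\wr S_n)$ of conjugacy classes of $G\wr S_n$ consisting of $r$-th powers is $$\mathcal{CC}_r(G\wr S_n)=\sum_{(n_1,\dots,n_s)}p_r(n_1)\cdots p_r(n_d)\,p_r'(n_{d+1})\cdots p_r'(n_s),$$ where the sum runs over all ordered $s$-tuples $(n_1,\dots,n_s)$ of integers $n_i\ge 0$ with $\sum_{i=1}^s n_i=n$.
   Context: $G\wr S_n$ is the set of pairs $(f,\pi)$ with $f:\{1,\dots,n\}\to G$ and $\pi\in S_n$, with product $(f,\pi)(f',\pi')=(ff'_\pi,\pi\pi')$, $f'_\pi(i)=f'(\pi^{-1}(i))$, pointwise product of functions. A conjugacy class of a group is an $r$-th power if all its elements are $r$-th powers in that group. For a partition $\lambda=1^{m_1}2^{m_2}\cdots$ of $n$ ($m_i$ = number of parts equal to $i$): $p_r(n)$ is the number of partitions of $n$ with $r\mid m_i$ for every $i\ge1$, and $p_r'(n)$ is the number of partitions of $n$ with $r\mid m_{ri}$ for every $i\ge 1$. By convention $p_r(0)=p_r'(0)=1$. *)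

theory Defs
  imports "HOL-Computational_Algebra.Primes" "HOL-Algebra.Group" "HOL-Library.FuncSet" "HOL-Combinatorics.Permutations"
begin

definition conj_class :: "('a, 'b) monoid_scheme \<Rightarrow> 'a \<Rightarrow> 'a set" where
  "conj_class G x = {g \<otimes>\<^bsub>G\<^esub> x \<otimes>\<^bsub>G\<^esub> inv\<^bsub>G\<^esub> g | g. g \<in> carrier G}"

definition conj_classes :: "('a, 'b) monoid_scheme \<Rightarrow> 'a set set" where
  "conj_classes G = conj_class G ` carrier G"

definition is_rth_power_class :: "('a, 'b) monoid_scheme \<Rightarrow> nat \<Rightarrow> 'a set \<Rightarrow> bool" where
  "is_rth_power_class G r C \<longleftrightarrow> (\<forall>y\<in>C. \<exists>z\<in>carrier G. y = z [^]\<^bsub>G\<^esub> r)"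

definition CC :: "nat \<Rightarrow> ('a, 'b) monoid_scheme \<Rightarrow> nat" where
  "CC r G = card {C \<in> conj_classes G. is_rth_power_class G r C}"

text \<open>Wreath product G wr S_n: pairs (f, pi) with f : {1..n} -> carrier G (extensional)
  and pi a permutation of {1..n};
  (f,pi)(f',pi') = (f f'_pi, pi pi') with f'_pi(i) = f'(pi^-1(i)).\<close>
definition wreath :: "('a, 'b) monoid_scheme \<Rightarrow> nat \<Rightarrow> ((nat \<Rightarrow> 'a) \<times> (nat \<Rightarrow> nat)) monoid" where
  "wreath G n = \<lparr> carrier = {(f, \<pi>). f \<in> {1..n} \<rightarrow>\<^sub>E carrier G \<and> \<pi> permutes {1..n}},
     monoid.mult = (\<lambda>(f, \<pi>) (f', \<pi>'). ((\<lambda>i\<in>{1..n}. f i \<otimes>\<^bsub>G\<^esub> f' (Hilbert_Choice.inv \<pi> i)), \<pi> \<circ> \<pi>')),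
     monoid.one = ((\<lambda>i\<in>{1..n}. \<one>\<^bsub>G\<^esub>), id) \<rparr>"

text \<open>Partitions of n encoded by multiplicity functions m (m i = number of parts equal to i).\<close>
definition partition_mults :: "nat \<Rightarrow> (nat \<Rightarrow> nat) set" where
  "partition_mults n = {m. (\<forall>i. m i \<noteq> 0 \<longrightarrow> 1 \<le> i \<and> i \<le> n) \<and> (\<Sum>i=1..n. i * m i) = n}"

definition p_r :: "nat \<Rightarrow> nat \<Rightarrow> nat" where
  "p_r r n = card {m \<in> partition_mults n. \<forall>i\<ge>1. r dvd m i}"

definition p_r' :: "nat \<Rightarrow> nat \<Rightarrow> nat" where
  "p_r' r n = card {m \<in> partition_mults n. \<forall>i\<ge>1. r dvd m (r * i)}"

end

theory Submission
  imports Defs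
begin

section \<open>Orbits of a permutation\<close>

definition pord :: "(nat \<Rightarrow> nat) \<Rightarrow> nat \<Rightarrow> nat" where
  "pord q i = (LEAST k. 0 < k \<and> (q ^^ k) i = i)"

definition porb :: "(nat \<Rightarrow> nat) \<Rightarrow> nat \<Rightarrow> nat set" where
  "porb q i = (\<lambda>j. (q ^^ j) i) ` {..<pord q i}"

definition pbase :: "(nat \<Rightarrow> nat) \<Rightarrow> nat \<Rightarrow> nat" where
  "pbase q i = Min (porb q i)"

definition pidx :: "(nat \<Rightarrow> nat) \<Rightarrow> nat \<Rightarrow> nat" where
  "pidx q i = (LEAST j. (q ^^ j) (pbase q i) = i)"

locale fperm =
  fixes q :: "nat \<Rightarrow> nat" and S :: "nat set"
  assumes perm: "q permutes S" and fin: "finite S"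
begin

lemma inj_q: "inj q" using perm permutes_inj by blast

lemma inj_qn: "inj (q ^^ m)" using inj_q by simp

lemma pord_ex: "\<exists>k>0. (q ^^ k) i = i"
  using permutation_self[of q i] perm fin unfolding permutation_permutes by blast

lemma pord_pos: "0 < pord q i"
  using LeastI_ex[OF pord_ex[of i]] unfolding pord_def by blast

lemma pord_fix: "(q ^^ pord q i) i = i"
  using LeastI_ex[OF pord_ex[of i]] unfolding pord_def by blast

lemma pord_least: "0 < k \<Longrightarrow> k < pord q i \<Longrightarrow> (q ^^ k) i \<noteq> i"
  using not_less_Least unfolding pord_def by blast

lemma funpow_mult_fix: "(q ^^ (pord q i * a)) i = i"
proof (induct a)
  case 0 then show ?case by simp
next
  case (Suc a)
  have "(q ^^ (pord q i * Suc a)) i = (q ^^ pord q i) ((q ^^ (pord q i * a)) i)"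
    by (simp add: funpow_add)
  also have "\<dots> = i" using Suc pord_fix by simp
  finally show ?case .
qed

lemma funpow_mod: "(q ^^ m) i = (q ^^ (m mod pord q i)) i"
proof -
  have "(q ^^ m) i = (q ^^ (m mod pord q i + pord q i * (m div pord q i))) i"
    by simp
  also have "\<dots> = (q ^^ (m mod pord q i)) ((q ^^ (pord q i * (m div pord q i))) i)"
    by (simp only: funpow_add o_apply)
  also have "\<dots> = (q ^^ (m mod pord q i)) i" using funpow_mult_fix by simp
  finally show ?thesis .
qed

lemma fix_iff_dvd: "(q ^^ m) i = i \<longleftrightarrow> pord q i dvd m"
proof
  assume a: "(q ^^ m) i = i"
  have "(q ^^ (m mod pord q i)) i = i" using a funpow_mod by simp
  moreover have "m mod pord q i < pord q i" using pord_pos by simp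
  ultimately have "m mod pord q i = 0" using pord_least by (metis bot_nat_0.not_eq_extremum)
  then show "pord q i dvd m" by auto
next
  assume "pord q i dvd m"
  then show "(q ^^ m) i = i" using funpow_mult_fix by auto
qed

lemma funpow_eq_iff: "(q ^^ a) i = (q ^^ b) i \<longleftrightarrow> a mod pord q i = b mod pord q i"
proof -
  have key: "(q ^^ a) i = (q ^^ b) i \<longleftrightarrow> a mod pord q i = b mod pord q i" if "a \<le> b" for a b
  proof -
    have "(q ^^ b) i = (q ^^ a) ((q ^^ (b - a)) i)"
      using that by (metis funpow_add le_add_diff_inverse o_apply)
    then have "(q ^^ a) i = (q ^^ b) i \<longleftrightarrow> (q ^^ (b - a)) i = i"
      using inj_qn[of a] by (metis injD)
    also have "\<dots> \<longleftrightarrow> pord q i dvd (b - a)" by (rule fix_iff_dvd)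
    also have "\<dots> \<longleftrightarrow> a mod pord q i = b mod pord q i"
      using that by (metis mod_eq_dvd_iff_nat)
    finally show ?thesis .
  qed
  show ?thesis
    by (cases "a \<le> b") (use key[of a b] key[of b a] in auto)
qed

lemma pord_funpow: "pord q ((q ^^ j) i) = pord q i"
proof -
  have "(q ^^ k) ((q ^^ j) i) = (q ^^ j) i \<longleftrightarrow> (q ^^ k) i = i" for k
  proof -
    have "(q ^^ k) ((q ^^ j) i) = (q ^^ j) ((q ^^ k) i)"
      by (metis add.commute funpow_add o_apply)
    then show ?thesis using inj_qn[of j] by (metis injD)
  qed
  then show ?thesis unfolding pord_def by simp
qed

lemma in_porb: "(q ^^ j) i \<in> porb q i"
  unfolding porb_def using funpow_mod[of j i] pord_pos[of i]
  by (metis image_eqI lessThan_iff mod_less_divisor)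

lemma self_in_porb: "i \<in> porb q i"
  using in_porb[of 0 i] by simp

lemma porb_cases: "y \<in> porb q i \<Longrightarrow> \<exists>j<pord q i. y = (q ^^ j) i"
  unfolding porb_def by auto

lemma card_porb: "card (porb q i) = pord q i"
proof -
  have "inj_on (\<lambda>j. (q ^^ j) i) {..<pord q i}"
    by (rule inj_onI) (simp add: funpow_eq_iff)
  then show ?thesis unfolding porb_def by (simp add: card_image)
qed

lemma finite_porb: "finite (porb q i)"
  unfolding porb_def by simp

lemma porb_funpow: "porb q ((q ^^ j) i) = porb q i"
proof
  show "porb q ((q ^^ j) i) \<subseteq> porb q i"
  proof
    fix y assume "y \<in> porb q ((q ^^ j) i)"
    then obtain k where "y = (q ^^ k) ((q ^^ j) i)" unfolding porb_def by auto
    then have "y = (q ^^ (k + j)) i" by (simp add: funpow_add)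
    then show "y \<in> porb q i" using in_porb by simp
  qed
next
  show "porb q i \<subseteq> porb q ((q ^^ j) i)"
  proof
    fix y assume "y \<in> porb q i"
    then obtain k where y: "y = (q ^^ k) i" unfolding porb_def by auto
    let ?p = "pord q i"
    have "(q ^^ (k + ?p * j - j)) ((q ^^ j) i) = (q ^^ (k + ?p * j - j + j)) i"
      by (simp add: funpow_add)
    also have "k + ?p * j - j + j = k + ?p * j"
    proof -
      have "j \<le> ?p * j" using pord_pos[of i] by simp
      then show ?thesis by linarith
    qed
    also have "(q ^^ (k + ?p * j)) i = (q ^^ k) i"
      using funpow_eq_iff by simp
    finally show "y \<in> porb q ((q ^^ j) i)" using in_porb y by metis
  qed
qed

lemma porb_eq: "y \<in> porb q i \<Longrightarrow> porb q y = porb q i"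
  using porb_cases porb_funpow by blast

lemma pord_eq: "y \<in> porb q i \<Longrightarrow> pord q y = pord q i"
  using porb_cases pord_funpow by blast

lemma porb_sym: "y \<in> porb q i \<Longrightarrow> i \<in> porb q y"
  using porb_eq self_in_porb by blast

lemma porb_disj: "z \<in> porb q x \<Longrightarrow> z \<in> porb q y \<Longrightarrow> porb q x = porb q y"
  using porb_eq by metis

lemma porb_subset: "i \<in> S \<Longrightarrow> porb q i \<subseteq> S"
  unfolding porb_def using permutes_in_funpow_image[OF perm] by auto

lemma pbase_in: "pbase q i \<in> porb q i"
  unfolding pbase_def using finite_porb self_in_porb by (metis Min_in empty_iff)

lemma pbase_eq: "y \<in> porb q i \<Longrightarrow> pbase q y = pbase q i"
  unfolding pbase_def using porb_eq by simp

lemma pbase_funpow: "pbase q ((q ^^ j) i) = pbase q i"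
  using pbase_eq in_porb by blast

lemma pbase_pbase: "pbase q (pbase q i) = pbase q i"
  using pbase_eq pbase_in by blast

lemma pidx_ex: "\<exists>j<pord q i. (q ^^ j) (pbase q i) = i"
proof -
  have "i \<in> porb q (pbase q i)" using porb_sym[OF pbase_in] .
  then show ?thesis using porb_cases pord_eq[OF pbase_in] by metis
qed

lemma pidx: "(q ^^ pidx q i) (pbase q i) = i"
  using LeastI_ex pidx_ex unfolding pidx_def by (metis (mono_tags, lifting))

lemma pidx_less: "pidx q i < pord q i"
proof -
  obtain j where "j < pord q i" "(q ^^ j) (pbase q i) = i" using pidx_ex by blast
  then show ?thesis unfolding pidx_def by (metis (mono_tags, lifting) Least_le le_less_trans)
qed

lemma pidx_unique: "j < pord q b \<Longrightarrow> pbase q b = b \<Longrightarrow> pidx q ((q ^^ j) b) = j"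
proof -
  assume j: "j < pord q b" and b: "pbase q b = b"
  let ?i = "(q ^^ j) b"
  have pb: "pbase q ?i = b" using pbase_funpow b by simp
  have "(q ^^ pidx q ?i) b = (q ^^ j) b" using pidx[of ?i] pb by simp
  then have "pidx q ?i mod pord q b = j mod pord q b" using funpow_eq_iff by blast
  moreover have "pidx q ?i < pord q b" using pidx_less[of ?i] pord_funpow by simp
  ultimately show ?thesis using j by simp
qed

lemma pbase_in_S: "i \<in> S \<Longrightarrow> pbase q i \<in> S"
  using pbase_in porb_subset by blast

end

section \<open>Wreath product basics\<close>

declare One_nat_def [simp del]


lemma wreath_carrier:
  "x \<in> carrier (wreath G n) \<longleftrightarrow> fst x \<in> {1..n} \<rightarrow>\<^sub>E carrier G \<and> snd x permutes {1..n}"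
  by (cases x) (simp add: wreath_def)

lemma wreath_mult:
  "x \<otimes>\<^bsub>wreath G n\<^esub> y =
    ((\<lambda>i\<in>{1..n}. fst x i \<otimes>\<^bsub>G\<^esub> fst y (Hilbert_Choice.inv (snd x) i)), snd x \<circ> snd y)"
  by (cases x, cases y) (simp add: wreath_def)

lemma wreath_one: "\<one>\<^bsub>wreath G n\<^esub> = ((\<lambda>i\<in>{1..n}. \<one>\<^bsub>G\<^esub>), id)"
  by (simp add: wreath_def)

lemma inv_comp_perm:
  assumes "p permutes S" "q permutes S"
  shows "Hilbert_Choice.inv (p \<circ> q) = Hilbert_Choice.inv q \<circ> Hilbert_Choice.inv p"
  using assms by (simp add: o_inv_distrib permutes_bij)

lemma inv_in_I: "p permutes S \<Longrightarrow> i \<in> S \<Longrightarrow> Hilbert_Choice.inv p i \<in> S"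
  by (simp add: permutes_in_image permutes_inv)

definition rho :: "('x \<times> (nat \<Rightarrow> nat)) \<Rightarrow> nat \<Rightarrow> nat" where
  "rho x = Hilbert_Choice.inv (snd x)"

definition wlen :: "('x \<times> (nat \<Rightarrow> nat)) \<Rightarrow> nat \<Rightarrow> nat" where
  "wlen x i = pord (rho x) i"

definition wcp :: "('a, 'b) monoid_scheme \<Rightarrow> nat \<Rightarrow> ((nat \<Rightarrow> 'a) \<times> (nat \<Rightarrow> nat)) \<Rightarrow> nat \<Rightarrow> 'a" where
  "wcp G n x i = fst (x [^]\<^bsub>wreath G n\<^esub> wlen x i) i"

definition wlab :: "('a, 'b) monoid_scheme \<Rightarrow> nat \<Rightarrow> ((nat \<Rightarrow> 'a) \<times> (nat \<Rightarrow> nat)) \<Rightarrow> nat \<Rightarrow> nat \<times> 'a set" where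
  "wlab G n x i = (wlen x i, conj_class G (wcp G n x i))"

definition wN :: "('a, 'b) monoid_scheme \<Rightarrow> nat \<Rightarrow> ((nat \<Rightarrow> 'a) \<times> (nat \<Rightarrow> nat)) \<Rightarrow> nat \<times> 'a set \<Rightarrow> nat" where
  "wN G n x v = card {i\<in>{1..n}. wlab G n x i = v}"

lemma rho_perm: "x \<in> carrier (wreath G n) \<Longrightarrow> rho x permutes {1..n}"
  unfolding rho_def wreath_carrier by (rule permutes_inv) simp

lemma fperm_rho: "x \<in> carrier (wreath G n) \<Longrightarrow> fperm (rho x) {1..n}"
  unfolding fperm_def using rho_perm by blast

context group
begin

lemma wreath_group: "group (wreath G n)"
proof (rule groupI)
  fix x y assume x: "x \<in> carrier (wreath G n)" and y: "y \<in> carrier (wreath G n)"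
  show "x \<otimes>\<^bsub>wreath G n\<^esub> y \<in> carrier (wreath G n)"
  proof -
    have 1: "fst x \<in> {1..n} \<rightarrow>\<^sub>E carrier G" "snd x permutes {1..n}"
      "fst y \<in> {1..n} \<rightarrow>\<^sub>E carrier G" "snd y permutes {1..n}"
      using x y unfolding wreath_carrier by auto
    have "fst x i \<otimes> fst y (Hilbert_Choice.inv (snd x) i) \<in> carrier G" if "i \<in> {1..n}" for i
      using PiE_mem[OF 1(1) that] PiE_mem[OF 1(3) inv_in_I[OF 1(2) that]] by simp
    then show ?thesis using 1 unfolding wreath_carrier wreath_mult
      by (simp add: restrict_PiE_iff permutes_compose)
  qed
next
  show "\<one>\<^bsub>wreath G n\<^esub> \<in> carrier (wreath G n)"
    by (simp add: wreath_one wreath_carrier permutes_id)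
next
  fix x y z assume x: "x \<in> carrier (wreath G n)" and y: "y \<in> carrier (wreath G n)"
    and z: "z \<in> carrier (wreath G n)"
  obtain f p where xf: "x = (f, p)" by (cases x)
  obtain f' p' where yf: "y = (f', p')" by (cases y)
  obtain f'' p'' where zf: "z = (f'', p'')" by (cases z)
  have p: "p permutes {1..n}" and p': "p' permutes {1..n}" and p'': "p'' permutes {1..n}"
    and f: "f \<in> {1..n} \<rightarrow>\<^sub>E carrier G" and f': "f' \<in> {1..n} \<rightarrow>\<^sub>E carrier G"
    and f'': "f'' \<in> {1..n} \<rightarrow>\<^sub>E carrier G"
    using x y z xf yf zf by (auto simp: wreath_carrier)
  have ic: "Hilbert_Choice.inv (p \<circ> p') = Hilbert_Choice.inv p' \<circ> Hilbert_Choice.inv p"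
    using inv_comp_perm[OF p p'] .
  show "x \<otimes>\<^bsub>wreath G n\<^esub> y \<otimes>\<^bsub>wreath G n\<^esub> z = x \<otimes>\<^bsub>wreath G n\<^esub> (y \<otimes>\<^bsub>wreath G n\<^esub> z)"
  proof (rule prod_eqI)
    show "fst (x \<otimes>\<^bsub>wreath G n\<^esub> y \<otimes>\<^bsub>wreath G n\<^esub> z) = fst (x \<otimes>\<^bsub>wreath G n\<^esub> (y \<otimes>\<^bsub>wreath G n\<^esub> z))"
    proof
      fix i
      show "fst (x \<otimes>\<^bsub>wreath G n\<^esub> y \<otimes>\<^bsub>wreath G n\<^esub> z) i = fst (x \<otimes>\<^bsub>wreath G n\<^esub> (y \<otimes>\<^bsub>wreath G n\<^esub> z)) i"
      proof (cases "i \<in> {1..n}")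
        case True
        have m: "f i \<in> carrier G" "f' (Hilbert_Choice.inv p i) \<in> carrier G"
          "f'' (Hilbert_Choice.inv p' (Hilbert_Choice.inv p i)) \<in> carrier G"
          using PiE_mem[OF f True] PiE_mem[OF f' inv_in_I[OF p True]]
            PiE_mem[OF f'' inv_in_I[OF p' inv_in_I[OF p True]]] by auto
        show ?thesis using True inv_in_I[OF p True] m unfolding xf yf zf wreath_mult
          by (simp add: ic m_assoc)
      next
        case False then show ?thesis unfolding xf yf zf wreath_mult by auto
      qed
    qed
    show "snd (x \<otimes>\<^bsub>wreath G n\<^esub> y \<otimes>\<^bsub>wreath G n\<^esub> z) = snd (x \<otimes>\<^bsub>wreath G n\<^esub> (y \<otimes>\<^bsub>wreath G n\<^esub> z))"
      unfolding xf yf zf wreath_mult by (simp add: o_assoc)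
  qed
next
  fix x assume x: "x \<in> carrier (wreath G n)"
  obtain f p where xf: "x = (f, p)" by (cases x)
  have p: "p permutes {1..n}" and f: "f \<in> {1..n} \<rightarrow>\<^sub>E carrier G"
    using x xf by (auto simp: wreath_carrier)
  show "\<one>\<^bsub>wreath G n\<^esub> \<otimes>\<^bsub>wreath G n\<^esub> x = x"
  proof -
    have "(\<lambda>i\<in>{1..n}. (\<lambda>i\<in>{1..n}. \<one>) i \<otimes> f (Hilbert_Choice.inv id i)) = f"
    proof
      fix i show "(\<lambda>i\<in>{1..n}. (\<lambda>i\<in>{1..n}. \<one>) i \<otimes> f (Hilbert_Choice.inv id i)) i = f i"
        using PiE_mem[OF f, of i] PiE_arb[OF f, of i] by (cases "i \<in> {1..n}") (auto simp: inv_id)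
    qed
    then show ?thesis unfolding xf wreath_one wreath_mult by simp
  qed
next
  fix x assume x: "x \<in> carrier (wreath G n)"
  obtain f p where xf: "x = (f, p)" by (cases x)
  have p: "p permutes {1..n}" and f: "f \<in> {1..n} \<rightarrow>\<^sub>E carrier G"
    using x xf by (auto simp: wreath_carrier)
  let ?y = "((\<lambda>i\<in>{1..n}. inv (f (p i))), Hilbert_Choice.inv p)"
  have fp: "\<And>i. i \<in> {1..n} \<Longrightarrow> f (p i) \<in> carrier G"
    using f p by (meson PiE_mem permutes_in_image)
  have "?y \<in> carrier (wreath G n)"
    using f p fp by (auto simp: wreath_carrier permutes_inv permutes_in_image PiE_mem)
  moreover have "?y \<otimes>\<^bsub>wreath G n\<^esub> x = \<one>\<^bsub>wreath G n\<^esub>"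
    unfolding xf wreath_one wreath_mult
    using f p fp by (auto intro!: ext simp: PiE_mem permutes_inv_inv permutes_inv_o permutes_in_image)
  ultimately show "\<exists>y\<in>carrier (wreath G n). y \<otimes>\<^bsub>wreath G n\<^esub> x = \<one>\<^bsub>wreath G n\<^esub>" by blast
qed

end

abbreviation wp :: "('a, 'b) monoid_scheme \<Rightarrow> nat \<Rightarrow> ((nat \<Rightarrow> 'a) \<times> (nat \<Rightarrow> nat)) \<Rightarrow> nat \<Rightarrow> ((nat \<Rightarrow> 'a) \<times> (nat \<Rightarrow> nat))" where
  "wp G n x k \<equiv> x [^]\<^bsub>wreath G n\<^esub> k"

context group
begin

lemma W_monoid: "monoid (wreath G n)"
  using wreath_group group.is_monoid by blast

lemma wp_closed: "x \<in> carrier (wreath G n) \<Longrightarrow> wp G n x k \<in> carrier (wreath G n)"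
  using monoid.nat_pow_closed[OF W_monoid] by blast

lemma wp_snd: "x \<in> carrier (wreath G n) \<Longrightarrow> snd (wp G n x k) = snd x ^^ k"
proof (induct k)
  case 0 then show ?case by (simp add: wreath_one)
next
  case (Suc k) then show ?case by (simp add: wreath_mult funpow_swap1 o_def)
qed

lemma wp_rho: "x \<in> carrier (wreath G n) \<Longrightarrow> rho (wp G n x k) = rho x ^^ k"
proof -
  assume x: "x \<in> carrier (wreath G n)"
  then have "bij (snd x)" by (meson permutes_bij wreath_carrier)
  then show ?thesis unfolding rho_def using wp_snd[OF x, of k] inv_fn by simp
qed

lemma wp_add:
  assumes x: "x \<in> carrier (wreath G n)" and i: "i \<in> {1..n}"
  shows "fst (wp G n x (a + b)) i = fst (wp G n x a) i \<otimes> fst (wp G n x b) ((rho x ^^ a) i)"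
proof -
  have "wp G n x (a + b) = wp G n x a \<otimes>\<^bsub>wreath G n\<^esub> wp G n x b"
    using monoid.nat_pow_mult[OF W_monoid x] by simp
  then show ?thesis using i wp_rho[OF x, of a] unfolding wreath_mult by (simp add: rho_def)
qed

lemma wp_0: "i \<in> {1..n} \<Longrightarrow> fst (wp G n x 0) i = \<one>"
  by (simp add: wreath_one)

lemma wp_1: "x \<in> carrier (wreath G n) \<Longrightarrow> wp G n x (Suc 0) = x"
  using monoid.l_one[OF W_monoid] by simp

lemma wp_fst_closed:
  "x \<in> carrier (wreath G n) \<Longrightarrow> i \<in> {1..n} \<Longrightarrow> fst (wp G n x k) i \<in> carrier G"
  using wp_closed[of x n k] by (metis PiE_mem wreath_carrier)

lemma fst_closed:
  "x \<in> carrier (wreath G n) \<Longrightarrow> i \<in> {1..n} \<Longrightarrow> fst x i \<in> carrier G"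
  by (metis PiE_mem wreath_carrier)

lemma wp_Suc:
  assumes x: "x \<in> carrier (wreath G n)" and i: "i \<in> {1..n}"
  shows "fst (wp G n x (Suc k)) i = fst (wp G n x k) i \<otimes> fst x ((rho x ^^ k) i)"
  using i wp_rho[OF x, of k] unfolding Group.nat_pow_Suc wreath_mult by (simp add: rho_def)

lemma wp_Suc2:
  assumes x: "x \<in> carrier (wreath G n)" and i: "i \<in> {1..n}"
  shows "fst (wp G n x (Suc k)) i = fst x i \<otimes> fst (wp G n x k) (rho x i)"
  using wp_add[OF x i, of "Suc 0" k] wp_1[OF x] by simp

subsection \<open>Conjugacy classes\<close>

lemma cancel1: "g \<in> carrier G \<Longrightarrow> w \<in> carrier G \<Longrightarrow> inv g \<otimes> (g \<otimes> w) = w"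
  by (simp add: m_assoc[symmetric])

lemma cancel2: "g \<in> carrier G \<Longrightarrow> w \<in> carrier G \<Longrightarrow> g \<otimes> (inv g \<otimes> w) = w"
  by (simp add: m_assoc[symmetric])

lemma conj_class_self: "x \<in> carrier G \<Longrightarrow> x \<in> conj_class G x"
  unfolding conj_class_def by (rule CollectI, rule exI[of _ \<one>]) simp

lemma conj_class_subset: "x \<in> carrier G \<Longrightarrow> conj_class G x \<subseteq> carrier G"
  unfolding conj_class_def by auto

lemma conj_class_conj:
  assumes g: "g \<in> carrier G" and x: "x \<in> carrier G"
  shows "conj_class G (g \<otimes> x \<otimes> inv g) = conj_class G x"
proof
  show "conj_class G (g \<otimes> x \<otimes> inv g) \<subseteq> conj_class G x"
  proof
    fix y assume "y \<in> conj_class G (g \<otimes> x \<otimes> inv g)"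
    then obtain h where h: "h \<in> carrier G" "y = h \<otimes> (g \<otimes> x \<otimes> inv g) \<otimes> inv h"
      unfolding conj_class_def by auto
    have "y = (h \<otimes> g) \<otimes> x \<otimes> inv (h \<otimes> g)"
      using h g x by (simp add: inv_mult_group m_assoc cancel1 cancel2)
    then show "y \<in> conj_class G x" unfolding conj_class_def using h g by blast
  qed
next
  show "conj_class G x \<subseteq> conj_class G (g \<otimes> x \<otimes> inv g)"
  proof
    fix y assume "y \<in> conj_class G x"
    then obtain h where h: "h \<in> carrier G" "y = h \<otimes> x \<otimes> inv h"
      unfolding conj_class_def by auto
    have "y = (h \<otimes> inv g) \<otimes> (g \<otimes> x \<otimes> inv g) \<otimes> inv (h \<otimes> inv g)"
      using h g x by (simp add: inv_mult_group m_assoc cancel1 cancel2)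
    then show "y \<in> conj_class G (g \<otimes> x \<otimes> inv g)" unfolding conj_class_def using h g by blast
  qed
qed

lemma conj_class_eq_iff:
  assumes x: "x \<in> carrier G" and y: "y \<in> carrier G"
  shows "conj_class G x = conj_class G y \<longleftrightarrow> y \<in> conj_class G x"
proof
  assume "conj_class G x = conj_class G y"
  then show "y \<in> conj_class G x" using conj_class_self[OF y] by simp
next
  assume "y \<in> conj_class G x"
  then obtain g where "g \<in> carrier G" "y = g \<otimes> x \<otimes> inv g" unfolding conj_class_def by auto
  then show "conj_class G x = conj_class G y" using conj_class_conj x by simp
qed

lemma group_conj_pow:
  assumes g: "g \<in> carrier G" and x: "x \<in> carrier G"
  shows "(g \<otimes> x \<otimes> inv g) [^] (k::nat) = g \<otimes> x [^] k \<otimes> inv g"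
proof (induct k)
  case 0 then show ?case using g by simp
next
  case (Suc k)
  have "(g \<otimes> x \<otimes> inv g) [^] Suc k = (g \<otimes> x [^] k \<otimes> inv g) \<otimes> (g \<otimes> x \<otimes> inv g)"
    using Suc by simp
  also have "\<dots> = g \<otimes> (x [^] k \<otimes> x) \<otimes> inv g"
    using g x by (simp add: m_assoc cancel1 cancel2)
  finally show ?case by simp
qed

lemma conj_class_pow:
  assumes x: "x \<in> carrier G"
  shows "conj_class G (x [^] (k::nat)) = (\<lambda>y. y [^] k) ` conj_class G x"
proof
  show "conj_class G (x [^] k) \<subseteq> (\<lambda>y. y [^] k) ` conj_class G x"
  proof
    fix y assume "y \<in> conj_class G (x [^] k)"
    then obtain g where g: "g \<in> carrier G" "y = g \<otimes> x [^] k \<otimes> inv g" unfolding conj_class_def by auto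
    have "y = (g \<otimes> x \<otimes> inv g) [^] k"
      using g x group_conj_pow by simp
    moreover have "g \<otimes> x \<otimes> inv g \<in> conj_class G x" unfolding conj_class_def using g by blast
    ultimately show "y \<in> (\<lambda>y. y [^] k) ` conj_class G x" by blast
  qed
next
  show "(\<lambda>y. y [^] k) ` conj_class G x \<subseteq> conj_class G (x [^] k)"
  proof
    fix z assume "z \<in> (\<lambda>y. y [^] k) ` conj_class G x"
    then obtain g where g: "g \<in> carrier G" "z = (g \<otimes> x \<otimes> inv g) [^] k" unfolding conj_class_def by auto
    have "z = g \<otimes> x [^] k \<otimes> inv g" using g x group_conj_pow by simp
    then show "z \<in> conj_class G (x [^] k)" unfolding conj_class_def using g by blast
  qed
qed

end

definition wB :: "nat \<Rightarrow> ((nat \<Rightarrow> 'a) \<times> (nat \<Rightarrow> nat)) \<Rightarrow> nat set" where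
  "wB n x = {b \<in> {1..n}. pbase (rho x) b = b}"

definition wT :: "('a, 'b) monoid_scheme \<Rightarrow> nat \<Rightarrow> ((nat \<Rightarrow> 'a) \<times> (nat \<Rightarrow> nat)) \<Rightarrow> nat \<times> 'a set \<Rightarrow> nat" where
  "wT G n x v = card {b \<in> wB n x. wlab G n x b = v}"

lemma inv_funpow_fix:
  assumes "p permutes S"
  shows "(Hilbert_Choice.inv p ^^ k) j = j \<longleftrightarrow> (p ^^ k) j = j"
proof -
  have b: "bij p" using assms permutes_bij by blast
  then have e: "Hilbert_Choice.inv p ^^ k = Hilbert_Choice.inv (p ^^ k)" by (simp add: inv_fn)
  have bk: "bij (p ^^ k)" using b bij_fn by blast
  show ?thesis unfolding e using bij_inv_eq_iff[OF bk, of j j] by auto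
qed

context group
begin

lemma wlen_pos: "x \<in> carrier (wreath G n) \<Longrightarrow> 0 < wlen x i"
  unfolding wlen_def by (rule fperm.pord_pos[OF fperm_rho])

lemma wlen_fix: "x \<in> carrier (wreath G n) \<Longrightarrow> (rho x ^^ wlen x i) i = i"
  unfolding wlen_def by (rule fperm.pord_fix[OF fperm_rho])

lemma wcp_closed: "x \<in> carrier (wreath G n) \<Longrightarrow> i \<in> {1..n} \<Longrightarrow> wcp G n x i \<in> carrier G"
  unfolding wcp_def by (rule wp_fst_closed)

lemma rho_in: "x \<in> carrier (wreath G n) \<Longrightarrow> i \<in> {1..n} \<Longrightarrow> rho x i \<in> {1..n}"
  using permutes_in_image[OF rho_perm] by blast

lemma wlen_rho: "x \<in> carrier (wreath G n) \<Longrightarrow> wlen x (rho x i) = wlen x i"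
proof -
  assume x: "x \<in> carrier (wreath G n)"
  show ?thesis unfolding wlen_def using fperm.pord_funpow[OF fperm_rho[OF x], of "Suc 0" i] by simp
qed

lemma wcp_rho:
  assumes x: "x \<in> carrier (wreath G n)" and i: "i \<in> {1..n}"
  shows "wcp G n x (rho x i) = inv (fst x i) \<otimes> wcp G n x i \<otimes> fst x i"
proof -
  let ?L = "wlen x i"
  have a: "fst (wp G n x (Suc ?L)) i = fst x i \<otimes> wcp G n x (rho x i)"
    using wp_Suc2[OF x i, of ?L] wlen_rho[OF x, of i] unfolding wcp_def by simp
  have b: "fst (wp G n x (Suc ?L)) i = wcp G n x i \<otimes> fst x i"
    using wp_Suc[OF x i, of ?L] wlen_fix[OF x, of i] unfolding wcp_def by simp
  have f: "fst x i \<in> carrier G" using fst_closed[OF x i] .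
  have c: "wcp G n x i \<in> carrier G" using wcp_closed[OF x i] .
  have c': "wcp G n x (rho x i) \<in> carrier G" using wcp_closed[OF x rho_in[OF x i]] .
  have "wcp G n x (rho x i) = inv (fst x i) \<otimes> (fst x i \<otimes> wcp G n x (rho x i))"
    using cancel1[OF f c'] by simp
  also have "\<dots> = inv (fst x i) \<otimes> (wcp G n x i \<otimes> fst x i)"
    using a b by simp
  finally have "wcp G n x (rho x i) = inv (fst x i) \<otimes> (wcp G n x i \<otimes> fst x i)" .
  then show ?thesis using f c by (simp add: m_assoc)
qed

lemma wcp_class_rho:
  assumes x: "x \<in> carrier (wreath G n)" and i: "i \<in> {1..n}"
  shows "conj_class G (wcp G n x (rho x i)) = conj_class G (wcp G n x i)"
proof -
  have f: "fst x i \<in> carrier G" using fst_closed[OF x i] .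
  have c: "wcp G n x i \<in> carrier G" using wcp_closed[OF x i] .
  have "inv (fst x i) \<otimes> wcp G n x i \<otimes> fst x i = inv (fst x i) \<otimes> wcp G n x i \<otimes> inv (inv (fst x i))"
    using f by simp
  then show ?thesis using wcp_rho[OF x i] conj_class_conj[of "inv (fst x i)" "wcp G n x i"] f c
    by simp
qed

lemma wlab_rho:
  assumes x: "x \<in> carrier (wreath G n)" and i: "i \<in> {1..n}"
  shows "wlab G n x (rho x i) = wlab G n x i"
  unfolding wlab_def using wcp_class_rho[OF x i] wlen_rho[OF x] by simp

lemma wlab_funpow:
  assumes x: "x \<in> carrier (wreath G n)" and i: "i \<in> {1..n}"
  shows "wlab G n x ((rho x ^^ j) i) = wlab G n x i"
proof (induct j)
  case 0 then show ?case by simp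
next
  case (Suc j)
  have "(rho x ^^ j) i \<in> {1..n}" using permutes_in_funpow_image[OF rho_perm[OF x] i] .
  then show ?case using wlab_rho[OF x] Suc by simp
qed

lemma wlab_porb:
  assumes x: "x \<in> carrier (wreath G n)" and i: "i \<in> {1..n}" and y: "y \<in> porb (rho x) i"
  shows "wlab G n x y = wlab G n x i"
  using y wlab_funpow[OF x i] unfolding porb_def by auto

lemma wp_mult_len:
  assumes x: "x \<in> carrier (wreath G n)" and i: "i \<in> {1..n}"
  shows "fst (wp G n x (wlen x i * q)) i = wcp G n x i [^] q"
proof (induct q)
  case 0 then show ?case using i by (simp add: wreath_one)
next
  case (Suc q)
  have fx: "(rho x ^^ (wlen x i * q)) i = i"
    using fperm.funpow_mult_fix[OF fperm_rho[OF x]] unfolding wlen_def by blast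
  have "fst (wp G n x (wlen x i * Suc q)) i = fst (wp G n x (wlen x i * q + wlen x i)) i"
    by (simp add: add.commute)
  also have "\<dots> = wcp G n x i [^] q \<otimes> wcp G n x i"
    using wp_add[OF x i, of "wlen x i * q" "wlen x i"] Suc fx unfolding wcp_def by simp
  finally show ?case by simp
qed

lemma wlen_le:
  assumes x: "x \<in> carrier (wreath G n)" and i: "i \<in> {1..n}"
  shows "wlen x i \<le> n"
proof -
  interpret fperm "rho x" "{1..n}" using fperm_rho[OF x] .
  have "card (porb (rho x) i) \<le> card {1..n}"
    using porb_subset[OF i] by (intro card_mono) auto
  then show ?thesis using card_porb unfolding wlen_def by simp
qed

lemma wN_eq:
  assumes x: "x \<in> carrier (wreath G n)"
  shows "wN G n x (k, C) = k * wT G n x (k, C)"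
proof -
  interpret fperm "rho x" "{1..n}" using fperm_rho[OF x] .
  let ?B = "{b \<in> wB n x. wlab G n x b = (k, C)}"
  have eq: "{i \<in> {1..n}. wlab G n x i = (k, C)} = (\<Union>b\<in>?B. porb (rho x) b)"
  proof
    show "{i \<in> {1..n}. wlab G n x i = (k, C)} \<subseteq> (\<Union>b\<in>?B. porb (rho x) b)"
    proof
      fix i assume "i \<in> {i \<in> {1..n}. wlab G n x i = (k, C)}"
      then have i: "i \<in> {1..n}" and l: "wlab G n x i = (k, C)" by auto
      let ?b = "pbase (rho x) i"
      have bi: "?b \<in> porb (rho x) i" using pbase_in .
      have b: "?b \<in> {1..n}" using pbase_in_S[OF i] .
      have "?b \<in> ?B" using b pbase_pbase wlab_porb[OF x i bi] l unfolding wB_def by simp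
      moreover have "i \<in> porb (rho x) ?b" using porb_sym[OF bi] .
      ultimately show "i \<in> (\<Union>b\<in>?B. porb (rho x) b)" by blast
    qed
  next
    show "(\<Union>b\<in>?B. porb (rho x) b) \<subseteq> {i \<in> {1..n}. wlab G n x i = (k, C)}"
    proof
      fix i assume "i \<in> (\<Union>b\<in>?B. porb (rho x) b)"
      then obtain b where b: "b \<in> ?B" and ib: "i \<in> porb (rho x) b" by blast
      have bI: "b \<in> {1..n}" using b unfolding wB_def by auto
      have "i \<in> {1..n}" using porb_subset[OF bI] ib by blast
      moreover have "wlab G n x i = (k, C)" using wlab_porb[OF x bI ib] b by simp
      ultimately show "i \<in> {i \<in> {1..n}. wlab G n x i = (k, C)}" by simp
    qed
  qed
  have fin: "finite ?B" unfolding wB_def by simp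
  have disj: "\<forall>b1\<in>?B. \<forall>b2\<in>?B. b1 \<noteq> b2 \<longrightarrow> porb (rho x) b1 \<inter> porb (rho x) b2 = {}"
  proof (intro ballI impI)
    fix b1 b2 assume b1: "b1 \<in> ?B" and b2: "b2 \<in> ?B" and ne: "b1 \<noteq> b2"
    show "porb (rho x) b1 \<inter> porb (rho x) b2 = {}"
    proof (rule ccontr)
      assume "porb (rho x) b1 \<inter> porb (rho x) b2 \<noteq> {}"
      then obtain z where "z \<in> porb (rho x) b1" "z \<in> porb (rho x) b2" by blast
      then have "porb (rho x) b1 = porb (rho x) b2" using porb_disj by blast
      then have "pbase (rho x) b1 = pbase (rho x) b2" unfolding pbase_def by simp
      then show False using b1 b2 ne unfolding wB_def by simp
    qed
  qed
  have cards: "card (porb (rho x) b) = k" if "b \<in> ?B" for b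
    using that card_porb unfolding wlab_def wlen_def by auto
  have "wN G n x (k, C) = card (\<Union>b\<in>?B. porb (rho x) b)"
    unfolding wN_def using eq by simp
  also have "\<dots> = (\<Sum>b\<in>?B. card (porb (rho x) b))"
    using card_UN_disjoint[OF fin _ disj] finite_porb by blast
  also have "\<dots> = (\<Sum>b\<in>?B. k)" using cards by simp
  also have "\<dots> = k * wT G n x (k, C)" unfolding wT_def by simp
  finally show ?thesis .
qed

end

lemma snd_mult: "snd (x \<otimes>\<^bsub>wreath G n\<^esub> y) = snd x \<circ> snd y"
  by (simp add: wreath_mult)

context group
begin

lemma wreath_inv:
  assumes u: "u \<in> carrier (wreath G n)"
  shows "inv\<^bsub>wreath G n\<^esub> u = ((\<lambda>i\<in>{1..n}. inv (fst u (snd u i))), Hilbert_Choice.inv (snd u))"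
proof -
  obtain f p where xf: "u = (f, p)" by (cases u)
  have p: "p permutes {1..n}" and f: "f \<in> {1..n} \<rightarrow>\<^sub>E carrier G"
    using u xf by (auto simp: wreath_carrier)
  let ?y = "((\<lambda>i\<in>{1..n}. inv (f (p i))), Hilbert_Choice.inv p)"
  have fp: "\<And>i. i \<in> {1..n} \<Longrightarrow> f (p i) \<in> carrier G"
    using f p by (meson PiE_mem permutes_in_image)
  have y: "?y \<in> carrier (wreath G n)"
    using f p fp by (auto simp: wreath_carrier permutes_inv permutes_in_image PiE_mem)
  have "?y \<otimes>\<^bsub>wreath G n\<^esub> u = \<one>\<^bsub>wreath G n\<^esub>"
    unfolding xf wreath_one wreath_mult
    using f p fp by (auto intro!: ext simp: PiE_mem permutes_inv_inv permutes_inv_o permutes_in_image)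
  then show ?thesis using group.inv_equality[OF wreath_group _ u y] xf by simp
qed

lemma wreath_conj_fst:
  assumes u: "u \<in> carrier (wreath G n)" and X: "X \<in> carrier (wreath G n)"
    and i: "i \<in> {1..n}" and fixi: "snd X i = i"
  shows "fst (u \<otimes>\<^bsub>wreath G n\<^esub> X \<otimes>\<^bsub>wreath G n\<^esub> inv\<^bsub>wreath G n\<^esub> u) (snd u i)
         = fst u (snd u i) \<otimes> fst X i \<otimes> inv (fst u (snd u i))"
proof -
  have su: "snd u permutes {1..n}" and sX: "snd X permutes {1..n}"
    using u X by (auto simp: wreath_carrier)
  have si: "snd u i \<in> {1..n}" using permutes_in_image[OF su] i by simp
  have ic: "Hilbert_Choice.inv (snd u \<circ> snd X) = Hilbert_Choice.inv (snd X) \<circ> Hilbert_Choice.inv (snd u)"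
    using inv_comp_perm[OF su sX] .
  have iu: "Hilbert_Choice.inv (snd u) (snd u i) = i" using permutes_inverses(2)[OF su] .
  have iX: "Hilbert_Choice.inv (snd X) i = i" using permutes_inv_eq[OF sX, of i i] fixi by simp
  let ?A = "u \<otimes>\<^bsub>wreath G n\<^esub> X"
  let ?V = "inv\<^bsub>wreath G n\<^esub> u"
  have e1: "fst (?A \<otimes>\<^bsub>wreath G n\<^esub> ?V) (snd u i) = fst ?A (snd u i) \<otimes> fst ?V (Hilbert_Choice.inv (snd ?A) (snd u i))"
    unfolding wreath_mult[where x = ?A] using si by (simp only: fst_conv restrict_apply' )
  have e2: "fst ?A (snd u i) = fst u (snd u i) \<otimes> fst X i"
    unfolding wreath_mult[where x = u] using si iu by (simp only: fst_conv restrict_apply')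
  have e3: "Hilbert_Choice.inv (snd ?A) (snd u i) = i"
    unfolding wreath_mult[where x = u] using ic iu iX by simp
  have e4: "fst ?V i = inv (fst u (snd u i))"
    unfolding wreath_inv[OF u] using i by simp
  show ?thesis using e1 e2 e3 e4 by simp
qed

lemma wlab_conj:
  assumes x: "x \<in> carrier (wreath G n)" and u: "u \<in> carrier (wreath G n)"
    and i: "i \<in> {1..n}"
  shows "wlab G n (u \<otimes>\<^bsub>wreath G n\<^esub> x \<otimes>\<^bsub>wreath G n\<^esub> inv\<^bsub>wreath G n\<^esub> u) (snd u i) = wlab G n x i"
proof -
  let ?W = "wreath G n"
  let ?y = "u \<otimes>\<^bsub>?W\<^esub> x \<otimes>\<^bsub>?W\<^esub> inv\<^bsub>?W\<^esub> u"
  have WG: "group ?W" by (rule wreath_group)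
  have y: "?y \<in> carrier ?W" using x u WG by (simp add: group.inv_closed monoid.m_closed group.is_monoid)
  have su: "snd u permutes {1..n}" using u by (simp add: wreath_carrier)
  have pw: "wp G n ?y k = u \<otimes>\<^bsub>?W\<^esub> wp G n x k \<otimes>\<^bsub>?W\<^esub> inv\<^bsub>?W\<^esub> u" for k
    using group.group_conj_pow[OF WG u x] by simp
  have sn: "snd (wp G n ?y k) (snd u i) = snd u (snd (wp G n x k) i)" for k
  proof -
    have "snd (wp G n ?y k) = snd (u \<otimes>\<^bsub>?W\<^esub> wp G n x k \<otimes>\<^bsub>?W\<^esub> inv\<^bsub>?W\<^esub> u)"
      using pw by simp
    also have "\<dots> = snd u \<circ> snd (wp G n x k) \<circ> Hilbert_Choice.inv (snd u)"
      unfolding snd_mult wreath_inv[OF u] by simp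
    finally have "snd (wp G n ?y k) = snd u \<circ> snd (wp G n x k) \<circ> Hilbert_Choice.inv (snd u)" .
    then show ?thesis using permutes_inverses(2)[OF su] by simp
  qed
  have fixeq: "(rho ?y ^^ k) (snd u i) = snd u i \<longleftrightarrow> (rho x ^^ k) i = i" for k
  proof -
    have "(rho ?y ^^ k) (snd u i) = snd u i \<longleftrightarrow> (snd ?y ^^ k) (snd u i) = snd u i"
    proof -
      have "snd ?y permutes {1..n}" using y by (simp add: wreath_carrier)
      then show ?thesis unfolding rho_def by (rule inv_funpow_fix)
    qed
    also have "\<dots> \<longleftrightarrow> snd u (snd (wp G n x k) i) = snd u i"
      using sn[of k] wp_snd[OF y, of k] by simp
    also have "\<dots> \<longleftrightarrow> snd (wp G n x k) i = i"
      using permutes_inj[OF su] by (simp add: inj_eq)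
    also have "\<dots> \<longleftrightarrow> (rho x ^^ k) i = i"
    proof -
      have sx: "snd x permutes {1..n}" using x by (simp add: wreath_carrier)
      show ?thesis unfolding rho_def using inv_funpow_fix[OF sx, of k i] wp_snd[OF x, of k] by simp
    qed
    finally show ?thesis .
  qed
  have len: "wlen ?y (snd u i) = wlen x i"
    unfolding wlen_def pord_def using fixeq by simp
  have X: "wp G n x (wlen x i) \<in> carrier ?W" using wp_closed[OF x] .
  have fixi: "snd (wp G n x (wlen x i)) i = i"
  proof -
    have sx: "snd x permutes {1..n}" using x by (simp add: wreath_carrier)
    show ?thesis using wlen_fix[OF x, of i] inv_funpow_fix[OF sx, of "wlen x i" i] wp_snd[OF x] unfolding rho_def
      by simp
  qed
  have cp: "wcp G n ?y (snd u i) = fst u (snd u i) \<otimes> wcp G n x i \<otimes> inv (fst u (snd u i))"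
    unfolding wcp_def len pw using wreath_conj_fst[OF u X i fixi] by simp
  have "fst u (snd u i) \<in> carrier G"
    using u permutes_in_image[OF su] i by (metis PiE_mem wreath_carrier)
  then have "conj_class G (wcp G n ?y (snd u i)) = conj_class G (wcp G n x i)"
    using cp conj_class_conj wcp_closed[OF x i] by simp
  then show ?thesis unfolding wlab_def using len by simp
qed

lemma wN_conj:
  assumes x: "x \<in> carrier (wreath G n)" and u: "u \<in> carrier (wreath G n)"
  shows "wN G n (u \<otimes>\<^bsub>wreath G n\<^esub> x \<otimes>\<^bsub>wreath G n\<^esub> inv\<^bsub>wreath G n\<^esub> u) = wN G n x"
proof
  fix v
  let ?y = "u \<otimes>\<^bsub>wreath G n\<^esub> x \<otimes>\<^bsub>wreath G n\<^esub> inv\<^bsub>wreath G n\<^esub> u"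
  have su: "snd u permutes {1..n}" using u by (simp add: wreath_carrier)
  have "{j \<in> {1..n}. wlab G n ?y j = v} = snd u ` {i \<in> {1..n}. wlab G n x i = v}"
  proof
    show "{j \<in> {1..n}. wlab G n ?y j = v} \<subseteq> snd u ` {i \<in> {1..n}. wlab G n x i = v}"
    proof
      fix j assume j: "j \<in> {j \<in> {1..n}. wlab G n ?y j = v}"
      let ?i = "Hilbert_Choice.inv (snd u) j"
      have i: "?i \<in> {1..n}" using j inv_in_I[OF su] by blast
      have e: "snd u ?i = j" using permutes_inverses(1)[OF su] .
      have "wlab G n x ?i = v" using wlab_conj[OF x u i] e j by simp
      then show "j \<in> snd u ` {i \<in> {1..n}. wlab G n x i = v}" using i e by force
    qed
  next
    show "snd u ` {i \<in> {1..n}. wlab G n x i = v} \<subseteq> {j \<in> {1..n}. wlab G n ?y j = v}"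
      using wlab_conj[OF x u] permutes_in_image[OF su] by auto
  qed
  moreover have "inj_on (snd u) {i \<in> {1..n}. wlab G n x i = v}"
    using permutes_inj[OF su] by (meson inj_on_subset subset_UNIV)
  ultimately show "wN G n ?y v = wN G n x v" unfolding wN_def by (simp add: card_image)
qed

end

definition phi :: "('a, 'b) monoid_scheme \<Rightarrow> nat \<Rightarrow> nat \<times> 'a set \<Rightarrow> nat \<times> 'a set" where
  "phi G r v = (if r dvd fst v then (fst v div r, snd v) else (fst v, (\<lambda>y. y [^]\<^bsub>G\<^esub> r) ` snd v))"

definition wcond :: "('a, 'b) monoid_scheme \<Rightarrow> nat \<Rightarrow> (nat \<times> 'a set \<Rightarrow> nat) \<Rightarrow> bool" where
  "wcond G r T \<longleftrightarrow> (\<forall>k C. (\<not> is_rth_power_class G r C \<or> r dvd k) \<longrightarrow> r * k dvd T (k, C))"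

lemma least_dvd: "0 < (M::nat) \<Longrightarrow> (LEAST k. 0 < k \<and> M dvd k) = M"
  by (rule Least_equality) (auto dest: dvd_imp_le)

context group
begin

lemma wlab_pow:
  assumes z: "z \<in> carrier (wreath G n)" and i: "i \<in> {1..n}" and r: "prime r"
  shows "wlab G n (wp G n z r) i = phi G r (wlab G n z i)"
proof -
  interpret fperm "rho z" "{1..n}" using fperm_rho[OF z] .
  let ?x = "wp G n z r"
  let ?L = "wlen z i"
  have Lpos: "0 < ?L" using wlen_pos[OF z] .
  have rpos: "0 < r" using r prime_gt_0_nat by blast
  have rx: "rho ?x = rho z ^^ r" using wp_rho[OF z] .
  have fx: "((rho z ^^ r) ^^ k) i = i \<longleftrightarrow> ?L dvd r * k" for k
    unfolding funpow_mult wlen_def using fix_iff_dvd by simp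
  have len: "wlen ?x i = (LEAST k. 0 < k \<and> ?L dvd r * k)"
  proof -
    have "wlen ?x i = pord (rho z ^^ r) i" unfolding wlen_def rx ..
    also have "\<dots> = (LEAST k. 0 < k \<and> ?L dvd r * k)"
      unfolding pord_def[of "rho z ^^ r"] using fx by simp
    finally show ?thesis .
  qed
  have pp: "wp G n ?x m = wp G n z (r * m)" for m
    using monoid.nat_pow_pow[OF W_monoid z] by simp
  show ?thesis
  proof (cases "r dvd ?L")
    case True
    then obtain L' where L': "?L = r * L'" by blast
    have L'pos: "0 < L'" using L' Lpos by (cases L') auto
    have "?L dvd r * k \<longleftrightarrow> L' dvd k" for k using L' rpos by simp
    then have l: "wlen ?x i = L'" using len least_dvd[OF L'pos] by simp
    have c: "wcp G n ?x i = wcp G n z i" unfolding wcp_def l pp L'[symmetric] ..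
    show ?thesis unfolding wlab_def phi_def using True l c L' rpos by simp
  next
    case False
    have cop: "coprime ?L r" using False r
      by (metis coprime_commute prime_imp_coprime_nat)
    have "?L dvd r * k \<longleftrightarrow> ?L dvd k" for k using cop
      by (metis coprime_dvd_mult_right_iff mult.commute)
    then have l: "wlen ?x i = ?L" using len least_dvd[OF Lpos] by simp
    have c: "wcp G n ?x i = wcp G n z i [^] r"
      unfolding wcp_def l pp using wp_mult_len[OF z i, of r] unfolding wcp_def
      by (simp add: mult.commute)
    show ?thesis unfolding wlab_def phi_def using False l c conj_class_pow[OF wcp_closed[OF z i]]
      by simp
  qed
qed

lemma wcond_pow:
  assumes z: "z \<in> carrier (wreath G n)" and r: "prime r"
  shows "wcond G r (wN G n (wp G n z r))"
  unfolding wcond_def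
proof (intro allI impI)
  fix k C assume cond: "\<not> is_rth_power_class G r C \<or> r dvd k"
  have rpos: "0 < r" using r prime_gt_0_nat by blast
  have "{i \<in> {1..n}. wlab G n (wp G n z r) i = (k, C)} = {i \<in> {1..n}. wlab G n z i = (r * k, C)}"
  proof (rule Collect_cong, rule conj_cong[OF refl])
    fix i assume i: "i \<in> {1..n}"
    obtain L D where LD: "wlab G n z i = (L, D)" by (cases "wlab G n z i")
    have D: "D = conj_class G (wcp G n z i)" using LD unfolding wlab_def by simp
    show "wlab G n (wp G n z r) i = (k, C) \<longleftrightarrow> wlab G n z i = (r * k, C)"
    proof
      assume a: "wlab G n (wp G n z r) i = (k, C)"
      show "wlab G n z i = (r * k, C)"
      proof (cases "r dvd L")
        case True
        then show ?thesis using a wlab_pow[OF z i r] LD unfolding phi_def by auto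
      next
        case False
        then have kL: "k = L" and C: "C = (\<lambda>y. y [^] r) ` D"
          using a wlab_pow[OF z i r] LD unfolding phi_def by auto
        have "is_rth_power_class G r C"
          unfolding is_rth_power_class_def C D
          using conj_class_subset[OF wcp_closed[OF z i]] by blast
        then show ?thesis using cond False kL by simp
      qed
    next
      assume "wlab G n z i = (r * k, C)"
      then show "wlab G n (wp G n z r) i = (k, C)"
        using wlab_pow[OF z i r] rpos unfolding phi_def by simp
    qed
  qed
  then have "wN G n (wp G n z r) (k, C) = wN G n z (r * k, C)" unfolding wN_def by simp
  also have "\<dots> = r * k * wT G n z (r * k, C)" using wN_eq[OF z] .
  finally show "r * k dvd wN G n (wp G n z r) (k, C)" by simp
qed

end

lemma fiber_bij:
  assumes A: "finite A" and B: "finite B"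
    and c: "\<And>v. card {a\<in>A. f a = v} = card {b\<in>B. g b = v}"
  shows "\<exists>\<beta>. bij_betw \<beta> A B \<and> (\<forall>a\<in>A. g (\<beta> a) = f a)"
proof -
  have "\<forall>v. \<exists>\<phi>. bij_betw \<phi> {a\<in>A. f a = v} {b\<in>B. g b = v}"
    using A B c by (intro allI finite_same_card_bij) auto
  then obtain \<Phi> where \<Phi>: "\<And>v. bij_betw (\<Phi> v) {a\<in>A. f a = v} {b\<in>B. g b = v}"
    by metis
  define \<beta> where "\<beta> a = \<Phi> (f a) a" for a
  have m: "\<beta> a \<in> B \<and> g (\<beta> a) = f a" if "a \<in> A" for a
    using bij_betw_apply[OF \<Phi>[of "f a"], of a] that unfolding \<beta>_def by auto
  have "inj_on \<beta> A"
  proof (rule inj_onI)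
    fix a1 a2 assume a1: "a1 \<in> A" and a2: "a2 \<in> A" and e: "\<beta> a1 = \<beta> a2"
    have fe: "f a1 = f a2" using m[OF a1] m[OF a2] e by metis
    have "\<Phi> (f a1) a1 = \<Phi> (f a1) a2" using e fe unfolding \<beta>_def by simp
    then show "a1 = a2"
      using bij_betw_imp_inj_on[OF \<Phi>[of "f a1"]] a1 a2 fe by (auto dest: inj_onD)
  qed
  moreover have "\<beta> ` A = B"
  proof
    show "\<beta> ` A \<subseteq> B" using m by auto
  next
    show "B \<subseteq> \<beta> ` A"
    proof
      fix b assume b: "b \<in> B"
      have "b \<in> {b'\<in>B. g b' = g b}" using b by simp
      then have "b \<in> \<Phi> (g b) ` {a\<in>A. f a = g b}"
        using bij_betw_imp_surj_on[OF \<Phi>[of "g b"]] by simp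
      then obtain a where "a \<in> A" "f a = g b" "b = \<Phi> (g b) a" by auto
      then have "\<beta> a = b" unfolding \<beta>_def by simp
      then show "b \<in> \<beta> ` A" using \<open>a \<in> A\<close> by blast
    qed
  qed
  ultimately show ?thesis using m unfolding bij_betw_def by blast
qed

context group
begin

lemma conj_from_intertwine:
  assumes x: "x \<in> carrier (wreath G n)" and y: "y \<in> carrier (wreath G n)"
    and s: "s permutes {1..n}"
    and ht: "\<And>p. p \<in> {1..n} \<Longrightarrow> ht p \<in> carrier G"
    and comm: "\<And>p. p \<in> {1..n} \<Longrightarrow> s (rho x p) = rho y (s p)"
    and rel: "\<And>p. p \<in> {1..n} \<Longrightarrow> fst y (s p) \<otimes> ht (rho x p) = ht p \<otimes> fst x p"
  shows "\<exists>u\<in>carrier (wreath G n). y = u \<otimes>\<^bsub>wreath G n\<^esub> x \<otimes>\<^bsub>wreath G n\<^esub> inv\<^bsub>wreath G n\<^esub> u"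
proof -
  let ?W = "wreath G n"
  define u where "u = ((\<lambda>i\<in>{1..n}. ht (Hilbert_Choice.inv s i)), s)"
  have sx: "snd x permutes {1..n}" and sy: "snd y permutes {1..n}"
    using x y by (auto simp: wreath_carrier)
  have u: "u \<in> carrier ?W"
    unfolding u_def wreath_carrier using s ht inv_in_I[OF s] by (auto simp: restrict_PiE_iff)
  have eq: "y \<otimes>\<^bsub>?W\<^esub> u = u \<otimes>\<^bsub>?W\<^esub> x"
  proof (rule prod_eqI)
    show "snd (y \<otimes>\<^bsub>?W\<^esub> u) = snd (u \<otimes>\<^bsub>?W\<^esub> x)"
    proof
      fix q
      show "snd (y \<otimes>\<^bsub>?W\<^esub> u) q = snd (u \<otimes>\<^bsub>?W\<^esub> x) q"
      proof (cases "q \<in> {1..n}")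
        case True
        let ?p = "snd x q"
        have p: "?p \<in> {1..n}" using permutes_in_image[OF sx] True by simp
        have rp: "rho x ?p = q" unfolding rho_def using permutes_inverses(2)[OF sx] .
        have "s q = rho y (s ?p)" using comm[OF p] rp by simp
        then have "snd y (s q) = s ?p" unfolding rho_def using permutes_inverses(1)[OF sy] by simp
        then show ?thesis unfolding snd_mult u_def by simp
      next
        case False
        then show ?thesis unfolding snd_mult u_def
          using permutes_not_in[OF s False] permutes_not_in[OF sx False] permutes_not_in[OF sy False]
          by simp
      qed
    qed
  next
    show "fst (y \<otimes>\<^bsub>?W\<^esub> u) = fst (u \<otimes>\<^bsub>?W\<^esub> x)"
    proof
      fix i
      show "fst (y \<otimes>\<^bsub>?W\<^esub> u) i = fst (u \<otimes>\<^bsub>?W\<^esub> x) i"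
      proof (cases "i \<in> {1..n}")
        case True
        let ?p = "Hilbert_Choice.inv s i"
        have p: "?p \<in> {1..n}" using inv_in_I[OF s True] .
        have sp: "s ?p = i" using permutes_inverses(1)[OF s] .
        have ry: "rho y i = s (rho x ?p)" using comm[OF p] sp by simp
        have ryI: "rho y i \<in> {1..n}" using inv_in_I[OF sy True] unfolding rho_def .
        have "Hilbert_Choice.inv s (rho y i) = rho x ?p"
          using ry permutes_inverses(2)[OF s] by simp
        then have "fst (y \<otimes>\<^bsub>?W\<^esub> u) i = fst y (s ?p) \<otimes> ht (rho x ?p)"
          unfolding wreath_mult u_def using True ryI sp by (simp add: rho_def)
        also have "\<dots> = ht ?p \<otimes> fst x ?p" using rel[OF p] .
        also have "\<dots> = fst (u \<otimes>\<^bsub>?W\<^esub> x) i"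
          unfolding wreath_mult u_def using True by simp
        finally show ?thesis .
      next
        case False
        then show ?thesis unfolding wreath_mult by auto
      qed
    qed
  qed
  have WG: "group ?W" by (rule wreath_group)
  have "y = y \<otimes>\<^bsub>?W\<^esub> u \<otimes>\<^bsub>?W\<^esub> inv\<^bsub>?W\<^esub> u"
    using WG u y by (simp add: group.inv_closed monoid.m_assoc group.is_monoid group.r_inv monoid.r_one)
  also have "\<dots> = u \<otimes>\<^bsub>?W\<^esub> x \<otimes>\<^bsub>?W\<^esub> inv\<^bsub>?W\<^esub> u" using eq by simp
  finally show ?thesis using u by blast
qed

end

context group
begin

lemma alg1:
  assumes "a \<in> carrier G" "A \<in> carrier G" "g \<in> carrier G" "B \<in> carrier G" "b \<in> carrier G"
  shows "a \<otimes> (inv (A \<otimes> a) \<otimes> g \<otimes> (B \<otimes> b)) = inv A \<otimes> g \<otimes> B \<otimes> b"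
  using assms by (simp add: inv_mult_group m_assoc cancel1 cancel2)

lemma alg2:
  assumes "a \<in> carrier G" "A \<in> carrier G" "g \<in> carrier G" "B \<in> carrier G" "b \<in> carrier G"
    and e: "(A \<otimes> a) \<otimes> g = g \<otimes> (B \<otimes> b)"
  shows "a \<otimes> g = inv A \<otimes> g \<otimes> B \<otimes> b"
proof -
  have "inv A \<otimes> ((A \<otimes> a) \<otimes> g) = a \<otimes> g" using assms(1-3) by (simp add: m_assoc cancel1)
  then have "a \<otimes> g = inv A \<otimes> ((A \<otimes> a) \<otimes> g)" by simp
  also have "\<dots> = inv A \<otimes> (g \<otimes> (B \<otimes> b))" using e by simp
  finally show ?thesis using assms by (simp add: m_assoc)
qed

lemma wN_conj_exists:
  assumes x: "x \<in> carrier (wreath G n)" and y: "y \<in> carrier (wreath G n)"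
    and N: "wN G n x = wN G n y"
  shows "\<exists>u\<in>carrier (wreath G n). y = u \<otimes>\<^bsub>wreath G n\<^esub> x \<otimes>\<^bsub>wreath G n\<^esub> inv\<^bsub>wreath G n\<^esub> u"
proof -
  interpret X: fperm "rho x" "{1..n}" using fperm_rho[OF x] .
  interpret Y: fperm "rho y" "{1..n}" using fperm_rho[OF y] .
  have T: "card {b \<in> wB n x. wlab G n x b = v} = card {b \<in> wB n y. wlab G n y b = v}" for v
  proof (cases v)
    case (Pair k C)
    show ?thesis
    proof (cases "k = 0")
      case True
      have e1: "{b \<in> wB n x. wlab G n x b = v} = {}"
        using wlen_pos[OF x] Pair True unfolding wlab_def by auto
      have e2: "{b \<in> wB n y. wlab G n y b = v} = {}"
        using wlen_pos[OF y] Pair True unfolding wlab_def by auto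
      show ?thesis unfolding e1 e2 ..
    next
      case False
      then show ?thesis using wN_eq[OF x, of k C] wN_eq[OF y, of k C] N Pair
        unfolding wT_def by simp
    qed
  qed
  have finB: "finite (wB n x)" "finite (wB n y)" unfolding wB_def by auto
  obtain \<beta> where \<beta>: "bij_betw \<beta> (wB n x) (wB n y)"
    and \<beta>l: "\<And>b. b \<in> wB n x \<Longrightarrow> wlab G n y (\<beta> b) = wlab G n x b"
    using fiber_bij[OF finB T] by blast
  have \<beta>B: "\<beta> b \<in> wB n y" if "b \<in> wB n x" for b using bij_betw_apply[OF \<beta> that] .
  have wBI: "b \<in> {1..n}" if "b \<in> wB n x" for b using that unfolding wB_def by simp
  have wBI': "b \<in> {1..n}" if "b \<in> wB n y" for b using that unfolding wB_def by simp
  have wBb: "pbase (rho x) b = b" if "b \<in> wB n x" for b using that unfolding wB_def by simp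
  have wBb': "pbase (rho y) b = b" if "b \<in> wB n y" for b using that unfolding wB_def by simp
  have len_eq: "wlen y (\<beta> b) = wlen x b" if "b \<in> wB n x" for b
    using \<beta>l[OF that] unfolding wlab_def by simp
  have cls_eq: "conj_class G (wcp G n y (\<beta> b)) = conj_class G (wcp G n x b)" if "b \<in> wB n x" for b
    using \<beta>l[OF that] unfolding wlab_def by simp
  have "\<forall>b\<in>wB n x. \<exists>g. g \<in> carrier G \<and> wcp G n y (\<beta> b) \<otimes> g = g \<otimes> wcp G n x b"
  proof
    fix b assume b: "b \<in> wB n x"
    have c: "wcp G n x b \<in> carrier G" using wcp_closed[OF x wBI[OF b]] .
    have c': "wcp G n y (\<beta> b) \<in> carrier G" using wcp_closed[OF y wBI'[OF \<beta>B[OF b]]] .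
    have "wcp G n y (\<beta> b) \<in> conj_class G (wcp G n x b)"
      using conj_class_eq_iff[OF c c'] cls_eq[OF b] by simp
    then obtain g where g: "g \<in> carrier G" "wcp G n y (\<beta> b) = g \<otimes> wcp G n x b \<otimes> inv g"
      unfolding conj_class_def by auto
    then have "wcp G n y (\<beta> b) \<otimes> g = g \<otimes> wcp G n x b"
      using c by (simp add: m_assoc)
    then show "\<exists>g. g \<in> carrier G \<and> wcp G n y (\<beta> b) \<otimes> g = g \<otimes> wcp G n x b" using g by blast
  qed
  then obtain gg where gg: "\<And>b. b \<in> wB n x \<Longrightarrow> gg b \<in> carrier G \<and> wcp G n y (\<beta> b) \<otimes> gg b = gg b \<otimes> wcp G n x b"
    by metis
  define s where "s p = (if p \<in> {1..n} then (rho y ^^ pidx (rho x) p) (\<beta> (pbase (rho x) p)) else p)" for p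
  define ht where "ht p = inv (fst (wp G n y (pidx (rho x) p)) (\<beta> (pbase (rho x) p))) \<otimes> gg (pbase (rho x) p)
      \<otimes> fst (wp G n x (pidx (rho x) p)) (pbase (rho x) p)" for p
  have decomp: "pbase (rho x) p \<in> wB n x \<and> pidx (rho x) p < wlen x (pbase (rho x) p)
      \<and> (rho x ^^ pidx (rho x) p) (pbase (rho x) p) = p" if p: "p \<in> {1..n}" for p
  proof -
    have "pbase (rho x) p \<in> wB n x" unfolding wB_def using X.pbase_in_S[OF p] X.pbase_pbase by simp
    moreover have "pidx (rho x) p < wlen x (pbase (rho x) p)"
      using X.pidx_less[of p] X.pord_eq[OF X.pbase_in[of p]] unfolding wlen_def by simp
    ultimately show ?thesis using X.pidx by simp
  qed
  have param: "(rho x ^^ j) b \<in> {1..n} \<and> pbase (rho x) ((rho x ^^ j) b) = b \<and> pidx (rho x) ((rho x ^^ j) b) = j"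
    if b: "b \<in> wB n x" and j: "j < wlen x b" for b j
  proof -
    have "(rho x ^^ j) b \<in> {1..n}" using permutes_in_funpow_image[OF rho_perm[OF x] wBI[OF b]] .
    moreover have "pbase (rho x) ((rho x ^^ j) b) = b" using X.pbase_funpow wBb[OF b] by simp
    moreover have "pidx (rho x) ((rho x ^^ j) b) = j"
      using X.pidx_unique[of j b] j wBb[OF b] unfolding wlen_def by simp
    ultimately show ?thesis by simp
  qed
  have s_par: "s ((rho x ^^ j) b) = (rho y ^^ j) (\<beta> b)" if b: "b \<in> wB n x" and j: "j < wlen x b" for b j
    using param[OF b j] unfolding s_def by simp
  have ht_par: "ht ((rho x ^^ j) b) = inv (fst (wp G n y j) (\<beta> b)) \<otimes> gg b \<otimes> fst (wp G n x j) b"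
    if b: "b \<in> wB n x" and j: "j < wlen x b" for b j
    using param[OF b j] unfolding ht_def by simp
  have comm: "s (rho x p) = rho y (s p)" if p: "p \<in> {1..n}" for p
  proof -
    let ?b = "pbase (rho x) p" and ?j = "pidx (rho x) p"
    have b: "?b \<in> wB n x" and j: "?j < wlen x ?b" and pe: "(rho x ^^ ?j) ?b = p"
      using decomp[OF p] by auto
    have sp: "s p = (rho y ^^ ?j) (\<beta> ?b)" using s_par[OF b j] pe by simp
    show ?thesis
    proof (cases "Suc ?j < wlen x ?b")
      case True
      have "rho x p = (rho x ^^ Suc ?j) ?b" using pe by (metis comp_apply funpow.simps(2))
      then have "s (rho x p) = (rho y ^^ Suc ?j) (\<beta> ?b)" using s_par[OF b True] by simp
      then show ?thesis using sp by simp
    next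
      case False
      then have L: "Suc ?j = wlen x ?b" using j by simp
      have "rho x p = (rho x ^^ Suc ?j) ?b" using pe by (metis comp_apply funpow.simps(2))
      also have "\<dots> = ?b" using L wlen_fix[OF x, of ?b] by simp
      finally have rp: "rho x p = (rho x ^^ 0) ?b" by simp
      have "s (rho x p) = \<beta> ?b" using s_par[OF b, of 0] wlen_pos[OF x] rp by simp
      moreover have "rho y (s p) = (rho y ^^ Suc ?j) (\<beta> ?b)" using sp by simp
      moreover have "(rho y ^^ Suc ?j) (\<beta> ?b) = \<beta> ?b"
        using L len_eq[OF b] wlen_fix[OF y, of "\<beta> ?b"] by simp
      ultimately show ?thesis by simp
    qed
  qed
  have rel: "fst y (s p) \<otimes> ht (rho x p) = ht p \<otimes> fst x p" if p: "p \<in> {1..n}" for p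
  proof -
    let ?b = "pbase (rho x) p" and ?j = "pidx (rho x) p"
    have b: "?b \<in> wB n x" and j: "?j < wlen x ?b" and pe: "(rho x ^^ ?j) ?b = p"
      using decomp[OF p] by auto
    have bI: "?b \<in> {1..n}" using wBI[OF b] .
    have bI': "\<beta> ?b \<in> {1..n}" using wBI'[OF \<beta>B[OF b]] .
    have sp: "s p = (rho y ^^ ?j) (\<beta> ?b)" using s_par[OF b j] pe by simp
    have spI: "s p \<in> {1..n}" using sp permutes_in_funpow_image[OF rho_perm[OF y] bI'] by simp
    have hp: "ht p = inv (fst (wp G n y ?j) (\<beta> ?b)) \<otimes> gg ?b \<otimes> fst (wp G n x ?j) ?b"
      using ht_par[OF b j] pe by simp
    let ?a = "fst y (s p)" and ?A = "fst (wp G n y ?j) (\<beta> ?b)" and ?g = "gg ?b"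
      and ?B = "fst (wp G n x ?j) ?b" and ?bb = "fst x p"
    have mem: "?a \<in> carrier G" "?A \<in> carrier G" "?g \<in> carrier G" "?B \<in> carrier G" "?bb \<in> carrier G"
      using fst_closed[OF y spI] wp_fst_closed[OF y bI'] gg[OF b] wp_fst_closed[OF x bI] fst_closed[OF x p]
      by auto
    have sucy: "fst (wp G n y (Suc ?j)) (\<beta> ?b) = ?A \<otimes> ?a"
      using wp_Suc[OF y bI', of ?j] sp by simp
    have sucx: "fst (wp G n x (Suc ?j)) ?b = ?B \<otimes> ?bb"
      using wp_Suc[OF x bI, of ?j] pe by simp
    show ?thesis
    proof (cases "Suc ?j < wlen x ?b")
      case True
      have "rho x p = (rho x ^^ Suc ?j) ?b" using pe by (metis comp_apply funpow.simps(2))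
      then have "ht (rho x p) = inv (?A \<otimes> ?a) \<otimes> ?g \<otimes> (?B \<otimes> ?bb)"
        using ht_par[OF b True] sucx sucy by simp
      then show ?thesis using hp alg1[OF mem] by simp
    next
      case False
      then have L: "Suc ?j = wlen x ?b" using j by simp
      have "rho x p = (rho x ^^ Suc ?j) ?b" using pe by (metis comp_apply funpow.simps(2))
      also have "\<dots> = ?b" using L wlen_fix[OF x, of ?b] by simp
      finally have rp: "rho x p = (rho x ^^ 0) ?b" by simp
      have "ht (rho x p) = inv (fst (wp G n y 0) (\<beta> ?b)) \<otimes> ?g \<otimes> fst (wp G n x 0) ?b"
        using ht_par[OF b, of 0] wlen_pos[OF x] rp by simp
      also have "\<dots> = ?g" using wp_0[OF bI] wp_0[OF bI'] mem by simp
      finally have hr: "ht (rho x p) = ?g" .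
      have cy: "wcp G n y (\<beta> ?b) = ?A \<otimes> ?a" unfolding wcp_def using len_eq[OF b] L sucy by simp
      have cx: "wcp G n x ?b = ?B \<otimes> ?bb" unfolding wcp_def using L sucx by simp
      have "(?A \<otimes> ?a) \<otimes> ?g = ?g \<otimes> (?B \<otimes> ?bb)" using gg[OF b] cy cx by simp
      then show ?thesis using hr hp alg2[OF mem] by simp
    qed
  qed
  have htc: "ht p \<in> carrier G" if p: "p \<in> {1..n}" for p
  proof -
    let ?b = "pbase (rho x) p"
    have b: "?b \<in> wB n x" using decomp[OF p] by auto
    show ?thesis unfolding ht_def
      using wp_fst_closed[OF y wBI'[OF \<beta>B[OF b]]] wp_fst_closed[OF x wBI[OF b]] gg[OF b] by simp
  qed
  have sI: "s p \<in> {1..n}" if p: "p \<in> {1..n}" for p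
  proof -
    let ?b = "pbase (rho x) p"
    have b: "?b \<in> wB n x" using decomp[OF p] by auto
    show ?thesis unfolding s_def using p permutes_in_funpow_image[OF rho_perm[OF y] wBI'[OF \<beta>B[OF b]]] by simp
  qed
  have sinj: "inj_on s {1..n}"
  proof (rule inj_onI)
    fix p1 p2 assume p1: "p1 \<in> {1..n}" and p2: "p2 \<in> {1..n}" and e: "s p1 = s p2"
    let ?b1 = "pbase (rho x) p1" and ?j1 = "pidx (rho x) p1"
    let ?b2 = "pbase (rho x) p2" and ?j2 = "pidx (rho x) p2"
    have b1: "?b1 \<in> wB n x" and j1: "?j1 < wlen x ?b1" and pe1: "(rho x ^^ ?j1) ?b1 = p1"
      using decomp[OF p1] by auto
    have b2: "?b2 \<in> wB n x" and j2: "?j2 < wlen x ?b2" and pe2: "(rho x ^^ ?j2) ?b2 = p2"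
      using decomp[OF p2] by auto
    have e2: "(rho y ^^ ?j1) (\<beta> ?b1) = (rho y ^^ ?j2) (\<beta> ?b2)"
      using e s_par[OF b1 j1] s_par[OF b2 j2] pe1 pe2 by simp
    have "pbase (rho y) ((rho y ^^ ?j1) (\<beta> ?b1)) = \<beta> ?b1"
      using Y.pbase_funpow wBb'[OF \<beta>B[OF b1]] by simp
    moreover have "pbase (rho y) ((rho y ^^ ?j2) (\<beta> ?b2)) = \<beta> ?b2"
      using Y.pbase_funpow wBb'[OF \<beta>B[OF b2]] by simp
    ultimately have "\<beta> ?b1 = \<beta> ?b2" using e2 by simp
    then have bb: "?b1 = ?b2" using bij_betw_imp_inj_on[OF \<beta>] b1 b2 by (auto dest: inj_onD)
    have "?j1 mod pord (rho y) (\<beta> ?b1) = ?j2 mod pord (rho y) (\<beta> ?b1)"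
      using e2 bb Y.funpow_eq_iff by simp
    moreover have "pord (rho y) (\<beta> ?b1) = wlen x ?b1" using len_eq[OF b1] unfolding wlen_def by simp
    ultimately have "?j1 = ?j2" using j1 j2 bb by simp
    then show "p1 = p2" using pe1 pe2 bb by metis
  qed
  have "s ` {1..n} \<subseteq> {1..n}" using sI by auto
  then have "s ` {1..n} = {1..n}"
    using endo_inj_surj[of "{1..n}" s] sinj by simp
  then have sperm: "s permutes {1..n}"
    using sinj by (intro bij_imp_permutes) (auto simp: bij_betw_def s_def)
  show ?thesis using conj_from_intertwine[OF x y sperm htc comm rel] by blast
qed

end

context group
begin

lemma wext:
  assumes x': "x' \<in> carrier (wreath G m)" and L: "0 < L" and c: "c \<in> carrier G"
  shows "\<exists>x \<in> carrier (wreath G (m + L)).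
    (\<forall>i\<in>{1..m}. wlab G (m + L) x i = wlab G m x' i) \<and>
    (\<forall>i\<in>{m+1..m+L}. wlab G (m + L) x i = (L, conj_class G c))"
proof -
  let ?blk = "{m+1..m+L}"
  define cyc where "cyc i = (if i \<in> ?blk then (if i = m + 1 then m + L else i - 1) else i)" for i
  define nxt where "nxt i = (if i \<in> ?blk then (if i = m + L then m + 1 else i + 1) else rho x' i)" for i
  define f where "f = (\<lambda>i\<in>{1..m+L}. if i \<le> m then fst x' i else if i = m + 1 then c else \<one>)"
  define x where "x = (f, snd x' \<circ> cyc)"
  have sx': "snd x' permutes {1..m}" using x' by (simp add: wreath_carrier)
  have rx': "rho x' permutes {1..m}" using rho_perm[OF x'] .
  have cyc_inj: "inj_on cyc ?blk"
    by (rule inj_onI) (auto simp: cyc_def split: if_splits)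
  have "cyc i \<in> ?blk" if "i \<in> ?blk" for i using that L by (cases "i = m + 1") (auto simp: cyc_def)
  then have cyc_img: "cyc ` ?blk \<subseteq> ?blk" by auto
  have "cyc ` ?blk = ?blk" using endo_inj_surj[OF _ cyc_img cyc_inj] by simp
  then have "bij_betw cyc ?blk ?blk" unfolding bij_betw_def using cyc_inj by simp
  then have cyc_perm: "cyc permutes ?blk" by (rule bij_imp_permutes) (use L in \<open>auto simp: cyc_def\<close>)
  have p1: "cyc permutes {1..m+L}" using permutes_subset[OF cyc_perm] by auto
  have p2: "snd x' permutes {1..m+L}" using permutes_subset[OF sx'] by auto
  have xperm: "snd x' \<circ> cyc permutes {1..m+L}" using permutes_compose[OF p1 p2] .
  have fmem: "f \<in> {1..m+L} \<rightarrow>\<^sub>E carrier G"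
    unfolding f_def using c fst_closed[OF x'] by (auto simp: restrict_PiE_iff)
  have x: "x \<in> carrier (wreath G (m + L))" unfolding x_def wreath_carrier using fmem xperm by simp
  have sx'_out: "snd x' i = i" if "i \<notin> {1..m}" for i using permutes_not_in[OF sx' that] .
  have rx'_out: "rho x' i = i" if "i \<notin> {1..m}" for i using permutes_not_in[OF rx' that] .
  have rx'_in: "rho x' i \<in> {1..m}" if "i \<in> {1..m}" for i using permutes_in_image[OF rx'] that by simp
  have rho_x: "rho x = nxt"
    unfolding rho_def x_def snd_conv
  proof (rule permutes_invI[OF xperm])
    fix i assume i: "i \<in> {1..m+L}"
    show "nxt ((snd x' \<circ> cyc) i) = i"
    proof (cases "i \<in> ?blk")
      case True
      have "cyc i \<in> ?blk" using cyc_img True by blast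
      then have "(snd x' \<circ> cyc) i = cyc i" using sx'_out by simp
      then show ?thesis using True L unfolding nxt_def cyc_def by auto
    next
      case False
      then have iI: "i \<in> {1..m}" using i by auto
      have "cyc i = i" using False L unfolding cyc_def by auto
      moreover have "snd x' i \<in> {1..m}" using permutes_in_image[OF sx'] iI by simp
      moreover have "rho x' (snd x' i) = i" unfolding rho_def using permutes_inverses(2)[OF sx'] .
      ultimately show ?thesis unfolding nxt_def by auto
    qed
  next
    fix i assume i: "i \<notin> {1..m+L}"
    then show "nxt i = i" unfolding nxt_def using rx'_out by auto
  qed
  have agree_rho: "(rho x ^^ k) i = (rho x' ^^ k) i \<and> (rho x' ^^ k) i \<in> {1..m}" if i: "i \<in> {1..m}" for i k
  proof (induct k)
    case 0 then show ?case using i by simp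
  next
    case (Suc k)
    have "(rho x' ^^ k) i \<notin> ?blk" using Suc by auto
    then show ?case using Suc rx'_in unfolding rho_x nxt_def by simp
  qed
  have agree_len: "wlen x i = wlen x' i" if i: "i \<in> {1..m}" for i
    unfolding wlen_def pord_def using agree_rho[OF i] by simp
  have agree_fst: "fst (wp G (m + L) x k) i = fst (wp G m x' k) i" if i: "i \<in> {1..m}" for i k
  proof (induct k)
    case 0 then show ?case using i by (simp add: wreath_one)
  next
    case (Suc k)
    have iI: "i \<in> {1..m+L}" using i by auto
    have j: "(rho x' ^^ k) i \<in> {1..m}" using agree_rho[OF i] by simp
    have "fst x ((rho x ^^ k) i) = fst x' ((rho x' ^^ k) i)"
      using agree_rho[OF i, of k] j unfolding x_def f_def by auto
    then show ?case using wp_Suc[OF x iI, of k] wp_Suc[OF x' i, of k] Suc by simp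
  qed
  have old: "wlab G (m + L) x i = wlab G m x' i" if i: "i \<in> {1..m}" for i
    unfolding wlab_def wcp_def using agree_len[OF i] agree_fst[OF i] by simp
  have orb: "(nxt ^^ j) (m + 1) = m + 1 + j mod L" for j
  proof (induct j)
    case 0 then show ?case by simp
  next
    case (Suc j)
    have lt: "j mod L < L" using L by simp
    show ?case
    proof (cases "Suc (j mod L) = L")
      case True
      then have "Suc j mod L = 0" by (metis mod_Suc)
      then show ?thesis using Suc True unfolding nxt_def by auto
    next
      case False
      then have "Suc j mod L = Suc (j mod L)" by (metis mod_Suc)
      then show ?thesis using Suc False lt unfolding nxt_def by auto
    qed
  qed
  have b0: "m + 1 \<in> {1..m+L}" using L by auto
  have len0: "wlen x (m + 1) = L"
  proof -
    have "(rho x ^^ k) (m + 1) = m + 1 \<longleftrightarrow> L dvd k" for k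
      unfolding rho_x orb by (simp add: dvd_eq_mod_eq_0)
    then show ?thesis unfolding wlen_def pord_def using least_dvd[OF L] by simp
  qed
  have cpk: "fst (wp G (m + L) x k) (m + 1) = c" if "0 < k" "k \<le> L" for k
    using that
  proof (induct k)
    case 0 then show ?case by simp
  next
    case (Suc k)
    show ?case
    proof (cases "k = 0")
      case True
      then show ?thesis using wp_1[OF x] unfolding x_def f_def using L by simp
    next
      case False
      have "(rho x ^^ k) (m + 1) = m + 1 + k" unfolding rho_x orb using Suc by simp
      moreover have "fst x (m + 1 + k) = \<one>" unfolding x_def f_def using Suc False by auto
      ultimately show ?thesis using wp_Suc[OF x b0, of k] Suc False c by simp
    qed
  qed
  have lab0: "wlab G (m + L) x (m + 1) = (L, conj_class G c)"
    unfolding wlab_def wcp_def len0 using cpk[of L] L by simp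
  have new: "wlab G (m + L) x i = (L, conj_class G c)" if i: "i \<in> ?blk" for i
  proof -
    have "i = (rho x ^^ (i - (m + 1))) (m + 1)" unfolding rho_x orb using i by auto
    then show ?thesis using wlab_funpow[OF x b0, of "i - (m + 1)"] lab0 by simp
  qed
  show ?thesis using x old new by blast
qed

lemma wext_count:
  assumes x': "x' \<in> carrier (wreath G m)" and L: "0 < L" and c: "c \<in> carrier G"
  shows "\<exists>x \<in> carrier (wreath G (m + L)). \<forall>v.
    card {i\<in>{1..m+L}. \<Psi> (wlab G (m + L) x i) = v} =
    card {i\<in>{1..m}. \<Psi> (wlab G m x' i) = v} + (if \<Psi> (L, conj_class G c) = v then L else 0)"
proof -
  obtain x where x: "x \<in> carrier (wreath G (m + L))"
    and old: "\<forall>i\<in>{1..m}. wlab G (m + L) x i = wlab G m x' i"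
    and new: "\<forall>i\<in>{m+1..m+L}. wlab G (m + L) x i = (L, conj_class G c)"
    using wext[OF x' L c] by blast
  have "card {i\<in>{1..m+L}. \<Psi> (wlab G (m + L) x i) = v} =
    card {i\<in>{1..m}. \<Psi> (wlab G m x' i) = v} + (if \<Psi> (L, conj_class G c) = v then L else 0)" for v
  proof -
    have split: "{i\<in>{1..m+L}. \<Psi> (wlab G (m + L) x i) = v} =
      {i\<in>{1..m}. \<Psi> (wlab G m x' i) = v} \<union> {i\<in>{m+1..m+L}. \<Psi> (wlab G (m + L) x i) = v}"
      using old by auto
    have d: "{i\<in>{1..m}. \<Psi> (wlab G m x' i) = v} \<inter> {i\<in>{m+1..m+L}. \<Psi> (wlab G (m + L) x i) = v} = {}"
      by auto
    have b: "{i\<in>{m+1..m+L}. \<Psi> (wlab G (m + L) x i) = v} =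
      (if \<Psi> (L, conj_class G c) = v then {m+1..m+L} else {})"
      using new by auto
    show ?thesis unfolding split using d b by (simp add: card_Un_disjoint)
  qed
  then show ?thesis using x by blast
qed

lemma gen_construct:
  fixes \<Psi> :: "nat \<times> 'a set \<Rightarrow> 'v" and Good :: "nat \<Rightarrow> ('v \<Rightarrow> nat) set"
  assumes base: "\<And>T. T \<in> Good 0 \<Longrightarrow> T = (\<lambda>v. 0)"
    and step: "\<And>n T. 0 < n \<Longrightarrow> T \<in> Good n \<Longrightarrow> \<exists>L c T'. 0 < L \<and> L \<le> n \<and> c \<in> carrier G \<and>
        T' \<in> Good (n - L) \<and> (\<forall>v. T v = T' v + (if \<Psi> (L, conj_class G c) = v then L else 0))"
  shows "T \<in> Good n \<Longrightarrow> \<exists>z\<in>carrier (wreath G n). \<forall>v. card {i\<in>{1..n}. \<Psi> (wlab G n z i) = v} = T v"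
proof (induct n arbitrary: T rule: less_induct)
  case (less n)
  show ?case
  proof (cases "n = 0")
    case True
    then have T0: "T = (\<lambda>v. 0)" using base less.prems by simp
    have one: "\<one>\<^bsub>wreath G 0\<^esub> \<in> carrier (wreath G 0)"
      using monoid.one_closed[OF W_monoid] by blast
    have "\<forall>v. card {i\<in>{1..0::nat}. \<Psi> (wlab G 0 \<one>\<^bsub>wreath G 0\<^esub> i) = v} = T v" using T0 by simp
    then show ?thesis using one True by blast
  next
    case False
    then obtain L c T' where L: "0 < L" "L \<le> n" and c: "c \<in> carrier G" and T': "T' \<in> Good (n - L)"
      and Te: "\<forall>v. T v = T' v + (if \<Psi> (L, conj_class G c) = v then L else 0)"
      using step less.prems by blast
    obtain z' where z': "z' \<in> carrier (wreath G (n - L))"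
      and cz': "\<forall>v. card {i\<in>{1..n - L}. \<Psi> (wlab G (n - L) z' i) = v} = T' v"
      using less.hyps[of "n - L" T'] L T' by auto
    obtain z where z: "z \<in> carrier (wreath G (n - L + L))"
      and cz: "\<forall>v. card {i\<in>{1..n - L + L}. \<Psi> (wlab G (n - L + L) z i) = v} =
        card {i\<in>{1..n - L}. \<Psi> (wlab G (n - L) z' i) = v} + (if \<Psi> (L, conj_class G c) = v then L else 0)"
      using wext_count[OF z' L(1) c, of \<Psi>] by blast
    have nL: "n - L + L = n" using L by simp
    have "card {i\<in>{1..n}. \<Psi> (wlab G n z i) = v} = T v" for v
      using cz[rule_format, of v] cz'[rule_format, of v] Te[rule_format, of v] unfolding nL by simp
    then show ?thesis using z unfolding nL by blast
  qed
qed

end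

definition adm :: "('a, 'b) monoid_scheme \<Rightarrow> nat \<Rightarrow> (nat \<times> 'a set \<Rightarrow> nat) set" where
  "adm G n = {T. (\<forall>k C. T (k, C) \<noteq> 0 \<longrightarrow> 1 \<le> k \<and> k \<le> n \<and> C \<in> conj_classes G)
      \<and> (\<forall>k C. k dvd T (k, C)) \<and> (\<Sum>v \<in> {1..n} \<times> conj_classes G. T v) = n}"

lemma sum_fibers:
  assumes "finite V" "finite I" "f ` I \<subseteq> V"
  shows "(\<Sum>v\<in>V. card {i\<in>I. f i = v}) = card I"
proof -
  have "I = (\<Union>v\<in>V. {i\<in>I. f i = v})" using assms(3) by auto
  moreover have "card (\<Union>v\<in>V. {i\<in>I. f i = v}) = (\<Sum>v\<in>V. card {i\<in>I. f i = v})"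
    using assms(1,2) by (intro card_UN_disjoint) auto
  ultimately show ?thesis by simp
qed

lemma sum_update_minus:
  fixes T :: "'v \<Rightarrow> nat"
  assumes "finite V" "v \<in> V" "L \<le> T v"
  shows "(\<Sum>w\<in>V. (T(v := T v - L)) w) = (\<Sum>w\<in>V. T w) - L"
proof -
  have "(\<Sum>w\<in>V. (T(v := T v - L)) w) = (T v - L) + (\<Sum>w\<in>V - {v}. T w)"
    using assms by (simp add: sum.remove)
  moreover have "(\<Sum>w\<in>V. T w) = T v + (\<Sum>w\<in>V - {v}. T w)"
    using assms by (simp add: sum.remove)
  ultimately show ?thesis using assms(3) by simp
qed

context group
begin

lemma finite_conj_classes: "finite (carrier G) \<Longrightarrow> finite (conj_classes G)"
  unfolding conj_classes_def by simp

lemma conj_class_in: "c \<in> carrier G \<Longrightarrow> conj_class G c \<in> conj_classes G"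
  unfolding conj_classes_def by simp

lemma wN_adm:
  assumes fin: "finite (carrier G)" and x: "x \<in> carrier (wreath G n)"
  shows "wN G n x \<in> adm G n"
proof -
  let ?V = "{1..n} \<times> conj_classes G"
  have labV: "wlab G n x i \<in> ?V" if i: "i \<in> {1..n}" for i
    using wlen_pos[OF x, of i] wlen_le[OF x i] conj_class_in[OF wcp_closed[OF x i]]
    unfolding wlab_def by auto
  have supp: "1 \<le> k \<and> k \<le> n \<and> C \<in> conj_classes G" if nz: "wN G n x (k, C) \<noteq> 0" for k C
  proof -
    have "{i\<in>{1..n}. wlab G n x i = (k, C)} \<noteq> {}" using nz unfolding wN_def by auto
    then obtain i where "i \<in> {1..n}" "wlab G n x i = (k, C)" by blast
    then show ?thesis using labV by force
  qed
  have "(\<Sum>v\<in>?V. wN G n x v) = card {1..n}"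
    unfolding wN_def
  proof (rule sum_fibers)
    show "finite ?V" using finite_conj_classes[OF fin] by simp
    show "wlab G n x ` {1..n} \<subseteq> ?V" using labV by blast
  qed simp
  moreover have "\<forall>k C. k dvd wN G n x (k, C)" using wN_eq[OF x] by simp
  moreover have "\<forall>k C. wN G n x (k, C) \<noteq> 0 \<longrightarrow> 1 \<le> k \<and> k \<le> n \<and> C \<in> conj_classes G"
    using supp by blast
  ultimately show ?thesis unfolding adm_def by simp
qed

lemma adm_le_sum:
  assumes fin: "finite (carrier G)" and T: "T \<in> adm G n"
  shows "T w \<le> n"
proof (cases "T w = 0")
  case False
  obtain k C where w: "w = (k, C)" by (cases w)
  have "w \<in> {1..n} \<times> conj_classes G" using T False w unfolding adm_def by auto
  then have "T w \<le> (\<Sum>v \<in> {1..n} \<times> conj_classes G. T v)"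
    using finite_conj_classes[OF fin] by (intro member_le_sum) auto
  then show ?thesis using T unfolding adm_def by simp
qed simp

lemma adm_remove:
  assumes fin: "finite (carrier G)" and T: "T \<in> adm G n" and v: "v = (k, C)" and Tv: "T v \<noteq> 0"
    and L: "L \<le> T v" and kL: "k dvd L"
  shows "T(v := T v - L) \<in> adm G (n - L) \<and> L \<le> n"
proof -
  let ?V = "{1..n} \<times> conj_classes G"
  let ?T' = "T(v := T v - L)"
  have vV: "v \<in> ?V" using T Tv v unfolding adm_def by auto
  have sumT: "(\<Sum>w\<in>?V. T w) = n" using T unfolding adm_def by simp
  have Ln: "L \<le> n" using L adm_le_sum[OF fin T, of v] by simp
  have sum': "(\<Sum>w\<in>?V. ?T' w) = n - L"
    using sum_update_minus[of ?V v L T] vV L finite_conj_classes[OF fin] sumT by simp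
  have dv: "k' dvd ?T' (k', C')" for k' C'
    using T kL v unfolding adm_def by (auto intro: dvd_diff_nat)
  have supp: "1 \<le> k' \<and> k' \<le> n - L \<and> C' \<in> conj_classes G" if nz: "?T' (k', C') \<noteq> 0" for k' C'
  proof -
    have nz0: "T (k', C') \<noteq> 0" using nz by (cases "(k', C') = v") auto
    have 1: "1 \<le> k' \<and> C' \<in> conj_classes G" using T nz0 unfolding adm_def by auto
    have "(k', C') \<in> ?V" using T nz0 unfolding adm_def by auto
    then have "?T' (k', C') \<le> (\<Sum>w\<in>?V. ?T' w)"
      using finite_conj_classes[OF fin] by (intro member_le_sum) auto
    then have le: "?T' (k', C') \<le> n - L" using sum' by simp
    have "k' \<le> ?T' (k', C')" using dv[of k' C'] nz by (simp add: dvd_imp_le)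
    then show ?thesis using 1 le by simp
  qed
  have "(\<Sum>w \<in> {1..n - L} \<times> conj_classes G. ?T' w) = (\<Sum>w\<in>?V. ?T' w)"
  proof (rule sum.mono_neutral_left)
    show "finite ?V" using finite_conj_classes[OF fin] by simp
    show "{1..n - L} \<times> conj_classes G \<subseteq> ?V" by auto
    show "\<forall>i\<in>?V - {1..n - L} \<times> conj_classes G. ?T' i = 0"
      using supp by fastforce
  qed
  then show ?thesis unfolding adm_def using supp dv sum' Ln by simp
qed

lemma adm_nonzero:
  assumes T: "T \<in> adm G n" and n: "0 < n"
  shows "\<exists>k C. T (k, C) \<noteq> 0"
proof (rule ccontr)
  assume "\<not> (\<exists>k C. T (k, C) \<noteq> 0)"
  then have "(\<Sum>v \<in> {1..n} \<times> conj_classes G. T v) = 0" by (auto intro: sum.neutral)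
  then show False using T n unfolding adm_def by simp
qed

lemma adm_zero: "T \<in> adm G 0 \<Longrightarrow> T = (\<lambda>v. 0)"
  unfolding adm_def by fastforce

lemma wN_surj:
  assumes fin: "finite (carrier G)" and T: "T \<in> adm G n"
  shows "\<exists>x\<in>carrier (wreath G n). wN G n x = T"
proof -
  have "\<exists>z\<in>carrier (wreath G n). \<forall>v. card {i\<in>{1..n}. id (wlab G n z i) = v} = T v"
  proof (rule gen_construct[where Good = "adm G"])
    show "T \<in> adm G n" using T .
    show "\<And>T. T \<in> adm G 0 \<Longrightarrow> T = (\<lambda>v. 0)" using adm_zero by blast
  next
    fix n T assume n: "0 < n" and T: "T \<in> adm G n"
    obtain k C where nz: "T (k, C) \<noteq> 0" using adm_nonzero[OF T n] by blast
    have C: "C \<in> conj_classes G" and k: "1 \<le> k" using T nz unfolding adm_def by auto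
    obtain c where c: "c \<in> carrier G" "C = conj_class G c" using C unfolding conj_classes_def by auto
    have "k dvd T (k, C)" using T unfolding adm_def by auto
    then have kT: "k \<le> T (k, C)" using nz by (simp add: dvd_imp_le)
    have r: "T((k, C) := T (k, C) - k) \<in> adm G (n - k) \<and> k \<le> n"
      using adm_remove[OF fin T refl nz kT dvd_refl] .
    have "\<forall>v. T v = (T((k, C) := T (k, C) - k)) v + (if id (k, conj_class G c) = v then k else 0)"
      using c kT by auto
    then show "\<exists>L c T'. 0 < L \<and> L \<le> n \<and> c \<in> carrier G \<and> T' \<in> adm G (n - L) \<and>
        (\<forall>v. T v = T' v + (if id (L, conj_class G c) = v then L else 0))"
      using r k c by (intro exI[of _ k] exI[of _ c] exI[of _ "T((k, C) := T (k, C) - k)"]) auto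
  qed
  then obtain z where z: "z \<in> carrier (wreath G n)"
    and cz: "\<forall>v. card {i\<in>{1..n}. id (wlab G n z i) = v} = T v" by blast
  have "wN G n z = T"
  proof
    fix v show "wN G n z v = T v" unfolding wN_def using cz[rule_format, of v] by simp
  qed
  then show ?thesis using z by blast
qed

lemma wN_pow_surj:
  assumes fin: "finite (carrier G)" and r: "prime r" and T: "T \<in> adm G n" and cT: "wcond G r T"
  shows "\<exists>z\<in>carrier (wreath G n). wN G n (wp G n z r) = T"
proof -
  have rpos: "0 < r" using r prime_gt_0_nat by blast
  have "\<exists>z\<in>carrier (wreath G n). \<forall>v. card {i\<in>{1..n}. phi G r (wlab G n z i) = v} = T v"
  proof (rule gen_construct[where Good = "\<lambda>n. adm G n \<inter> {T. wcond G r T}"])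
    show "T \<in> adm G n \<inter> {T. wcond G r T}" using T cT by simp
    show "\<And>T. T \<in> adm G 0 \<inter> {T. wcond G r T} \<Longrightarrow> T = (\<lambda>v. 0)" using adm_zero by blast
  next
    fix n T assume n: "0 < n" and TT: "T \<in> adm G n \<inter> {T. wcond G r T}"
    have T: "T \<in> adm G n" and cT: "wcond G r T" using TT by auto
    obtain k C where nz: "T (k, C) \<noteq> 0" using adm_nonzero[OF T n] by blast
    have C: "C \<in> conj_classes G" and k: "1 \<le> k" using T nz unfolding adm_def by auto
    obtain c0 where c0: "c0 \<in> carrier G" "C = conj_class G c0" using C unfolding conj_classes_def by auto
    have kdvd: "k dvd T (k, C)" using T unfolding adm_def by auto
    show "\<exists>L c T'. 0 < L \<and> L \<le> n \<and> c \<in> carrier G \<and> T' \<in> adm G (n - L) \<inter> {T. wcond G r T} \<and>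
        (\<forall>v. T v = T' v + (if phi G r (L, conj_class G c) = v then L else 0))"
    proof (cases "\<not> is_rth_power_class G r C \<or> r dvd k")
      case True
      have rk: "r * k dvd T (k, C)" using cT True unfolding wcond_def by blast
      then have rkT: "r * k \<le> T (k, C)" using nz by (simp add: dvd_imp_le)
      let ?T' = "T((k, C) := T (k, C) - r * k)"
      have a: "?T' \<in> adm G (n - r * k) \<and> r * k \<le> n"
        using adm_remove[OF fin T refl nz rkT] by simp
      have b: "wcond G r ?T'"
        using cT rk unfolding wcond_def by (auto intro: dvd_diff_nat)
      have ph: "phi G r (r * k, conj_class G c0) = (k, C)" unfolding phi_def using c0 rpos by simp
      have "\<forall>v. T v = ?T' v + (if phi G r (r * k, conj_class G c0) = v then r * k else 0)"
        using ph rkT by auto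
      then show ?thesis using a b c0 k rpos
        by (intro exI[of _ "r * k"] exI[of _ c0] exI[of _ ?T']) auto
    next
      case False
      then have rth: "is_rth_power_class G r C" and nd: "\<not> r dvd k" by auto
      obtain w where w: "w \<in> carrier G" "c0 = w [^] r"
        using rth conj_class_self[OF c0(1)] c0(2) unfolding is_rth_power_class_def by blast
      have kT: "k \<le> T (k, C)" using nz kdvd by (simp add: dvd_imp_le)
      let ?T' = "T((k, C) := T (k, C) - k)"
      have a: "?T' \<in> adm G (n - k) \<and> k \<le> n"
        using adm_remove[OF fin T refl nz kT dvd_refl] .
      have b: "wcond G r ?T'"
        using cT False unfolding wcond_def by auto
      have ph: "phi G r (k, conj_class G w) = (k, C)"
        unfolding phi_def using nd c0 w conj_class_pow[OF w(1), of r] by simp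
      have "\<forall>v. T v = ?T' v + (if phi G r (k, conj_class G w) = v then k else 0)"
        using ph kT by auto
      then show ?thesis using a b w k
        by (intro exI[of _ k] exI[of _ w] exI[of _ ?T']) auto
    qed
  qed
  then obtain z where z: "z \<in> carrier (wreath G n)"
    and cz: "\<forall>v. card {i\<in>{1..n}. phi G r (wlab G n z i) = v} = T v" by blast
  have "wN G n (wp G n z r) v = T v" for v
  proof -
    have "{i\<in>{1..n}. wlab G n (wp G n z r) i = v} = {i\<in>{1..n}. phi G r (wlab G n z i) = v}"
      using wlab_pow[OF z _ r] by auto
    then show ?thesis unfolding wN_def using cz[rule_format, of v] by simp
  qed
  then show ?thesis using z by blast
qed

end

context group
begin

lemma W_conj_class_mem:
  "y \<in> conj_class (wreath G n) x \<longleftrightarrow>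
    (\<exists>u\<in>carrier (wreath G n). y = u \<otimes>\<^bsub>wreath G n\<^esub> x \<otimes>\<^bsub>wreath G n\<^esub> inv\<^bsub>wreath G n\<^esub> u)"
  unfolding conj_class_def by auto

lemma wN_class:
  assumes x: "x \<in> carrier (wreath G n)" and y: "y \<in> conj_class (wreath G n) x"
  shows "wN G n y = wN G n x"
  using y wN_conj[OF x] unfolding W_conj_class_mem by auto

lemma rth_iff:
  assumes fin: "finite (carrier G)" and r: "prime r" and x: "x \<in> carrier (wreath G n)"
  shows "is_rth_power_class (wreath G n) r (conj_class (wreath G n) x) \<longleftrightarrow> wcond G r (wN G n x)"
proof
  let ?W = "wreath G n"
  have WG: "group ?W" by (rule wreath_group)
  assume "is_rth_power_class ?W r (conj_class ?W x)"
  moreover have "x \<in> conj_class ?W x" using group.conj_class_self[OF WG x] .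
  ultimately obtain z where z: "z \<in> carrier ?W" "x = wp G n z r"
    unfolding is_rth_power_class_def by blast
  then show "wcond G r (wN G n x)" using wcond_pow[OF z(1) r] by simp
next
  let ?W = "wreath G n"
  have WG: "group ?W" by (rule wreath_group)
  assume c: "wcond G r (wN G n x)"
  obtain z where z: "z \<in> carrier ?W" and zN: "wN G n (wp G n z r) = wN G n x"
    using wN_pow_surj[OF fin r wN_adm[OF fin x] c] by blast
  have zr: "wp G n z r \<in> carrier ?W" using wp_closed[OF z] .
  obtain u where u: "u \<in> carrier ?W" and xu: "x = u \<otimes>\<^bsub>?W\<^esub> wp G n z r \<otimes>\<^bsub>?W\<^esub> inv\<^bsub>?W\<^esub> u"
    using wN_conj_exists[OF zr x zN] by blast
  let ?w = "u \<otimes>\<^bsub>?W\<^esub> z \<otimes>\<^bsub>?W\<^esub> inv\<^bsub>?W\<^esub> u"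
  have w: "?w \<in> carrier ?W" using u z WG by (simp add: group.inv_closed monoid.m_closed group.is_monoid)
  have xw: "x = wp G n ?w r" using xu group.group_conj_pow[OF WG u z, of r] by simp
  show "is_rth_power_class ?W r (conj_class ?W x)"
    unfolding is_rth_power_class_def
  proof
    fix y assume "y \<in> conj_class ?W x"
    then obtain g where g: "g \<in> carrier ?W" "y = g \<otimes>\<^bsub>?W\<^esub> x \<otimes>\<^bsub>?W\<^esub> inv\<^bsub>?W\<^esub> g"
      unfolding W_conj_class_mem by blast
    have "y = wp G n (g \<otimes>\<^bsub>?W\<^esub> ?w \<otimes>\<^bsub>?W\<^esub> inv\<^bsub>?W\<^esub> g) r"
      using g xw group.group_conj_pow[OF WG g(1) w, of r] by simp
    moreover have "g \<otimes>\<^bsub>?W\<^esub> ?w \<otimes>\<^bsub>?W\<^esub> inv\<^bsub>?W\<^esub> g \<in> carrier ?W"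
      using g w WG by (simp add: group.inv_closed monoid.m_closed group.is_monoid)
    ultimately show "\<exists>z\<in>carrier ?W. y = z [^]\<^bsub>?W\<^esub> r" by blast
  qed
qed

lemma CC_eq:
  assumes fin: "finite (carrier G)" and r: "prime r"
  shows "CC r (wreath G n) = card {T \<in> adm G n. wcond G r T}"
proof -
  let ?W = "wreath G n"
  have WG: "group ?W" by (rule wreath_group)
  define F where "F K = wN G n (SOME x. x \<in> K)" for K
  have Fcc: "F (conj_class ?W x) = wN G n x" if x: "x \<in> carrier ?W" for x
  proof -
    have "x \<in> conj_class ?W x" using group.conj_class_self[OF WG x] .
    then have "(SOME y. y \<in> conj_class ?W x) \<in> conj_class ?W x" by (rule someI)
    then show ?thesis unfolding F_def using wN_class[OF x] by simp
  qed
  let ?Cls = "{K \<in> conj_classes ?W. is_rth_power_class ?W r K}"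
  have img: "F ` ?Cls = {T \<in> adm G n. wcond G r T}"
  proof
    show "F ` ?Cls \<subseteq> {T \<in> adm G n. wcond G r T}"
    proof
      fix T assume "T \<in> F ` ?Cls"
      then obtain K where K: "K \<in> ?Cls" and T: "T = F K" by blast
      obtain x where x: "x \<in> carrier ?W" "K = conj_class ?W x"
        using K unfolding conj_classes_def by auto
      show "T \<in> {T \<in> adm G n. wcond G r T}"
        using T Fcc[OF x(1)] x K wN_adm[OF fin x(1)] rth_iff[OF fin r x(1)] by simp
    qed
  next
    show "{T \<in> adm G n. wcond G r T} \<subseteq> F ` ?Cls"
    proof
      fix T assume T: "T \<in> {T \<in> adm G n. wcond G r T}"
      obtain x where x: "x \<in> carrier ?W" "wN G n x = T" using wN_surj[OF fin] T by blast
      have "conj_class ?W x \<in> ?Cls"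
        using x rth_iff[OF fin r x(1)] T unfolding conj_classes_def by auto
      moreover have "F (conj_class ?W x) = T" using Fcc[OF x(1)] x(2) by simp
      ultimately show "T \<in> F ` ?Cls" by blast
    qed
  qed
  have inj: "inj_on F ?Cls"
  proof (rule inj_onI)
    fix K1 K2 assume K1: "K1 \<in> ?Cls" and K2: "K2 \<in> ?Cls" and e: "F K1 = F K2"
    obtain x1 where x1: "x1 \<in> carrier ?W" "K1 = conj_class ?W x1"
      using K1 unfolding conj_classes_def by auto
    obtain x2 where x2: "x2 \<in> carrier ?W" "K2 = conj_class ?W x2"
      using K2 unfolding conj_classes_def by auto
    have "wN G n x1 = wN G n x2" using e Fcc[OF x1(1)] Fcc[OF x2(1)] x1 x2 by simp
    then obtain u where "u \<in> carrier ?W" "x2 = u \<otimes>\<^bsub>?W\<^esub> x1 \<otimes>\<^bsub>?W\<^esub> inv\<^bsub>?W\<^esub> u"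
      using wN_conj_exists[OF x1(1) x2(1)] by blast
    then have "x2 \<in> conj_class ?W x1" unfolding W_conj_class_mem by blast
    then show "K1 = K2" using group.conj_class_eq_iff[OF WG x1(1) x2(1)] x1 x2 by simp
  qed
  have "CC r ?W = card ?Cls" unfolding CC_def ..
  also have "\<dots> = card (F ` ?Cls)" using card_image[OF inj] by simp
  also have "\<dots> = card {T \<in> adm G n. wcond G r T}" using img by simp
  finally show ?thesis .
qed

end

definition Pset :: "nat \<Rightarrow> nat \<Rightarrow> nat \<Rightarrow> nat \<Rightarrow> (nat \<Rightarrow> nat) set" where
  "Pset r d i j = {m \<in> partition_mults j. if i \<le> d then (\<forall>k\<ge>1. r dvd m k) else (\<forall>k\<ge>1. r dvd m (r * k))}"

definition Tset :: "nat \<Rightarrow> nat \<Rightarrow> (nat \<Rightarrow> nat) set" where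
  "Tset s n = {t :: nat \<Rightarrow> nat. (\<forall>i. i \<notin> {1..s} \<longrightarrow> t i = 0) \<and> (\<Sum>i=1..s. t i) = n}"

lemma finite_bounded_funs:
  assumes "finite A"
  shows "finite {m :: nat \<Rightarrow> nat. (\<forall>k. k \<notin> A \<longrightarrow> m k = 0) \<and> (\<forall>k. m k \<le> B)}"
proof -
  have "{m :: nat \<Rightarrow> nat. (\<forall>k. k \<notin> A \<longrightarrow> m k = 0) \<and> (\<forall>k. m k \<le> B)}
      \<subseteq> (\<lambda>g k. if k \<in> A then g k else 0) ` (A \<rightarrow>\<^sub>E {0..B})"
  proof
    fix m assume m: "m \<in> {m :: nat \<Rightarrow> nat. (\<forall>k. k \<notin> A \<longrightarrow> m k = 0) \<and> (\<forall>k. m k \<le> B)}"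
    have "m = (\<lambda>k. if k \<in> A then restrict m A k else 0)" using m by (auto intro!: ext)
    moreover have "restrict m A \<in> A \<rightarrow>\<^sub>E {0..B}" using m by auto
    ultimately show "m \<in> (\<lambda>g k. if k \<in> A then g k else 0) ` (A \<rightarrow>\<^sub>E {0..B})" by blast
  qed
  moreover have "finite ((\<lambda>g k. if k \<in> A then g k else 0) ` (A \<rightarrow>\<^sub>E {0..B}))"
    using assms by (intro finite_imageI finite_PiE) auto
  ultimately show ?thesis using finite_subset by blast
qed

lemma pm_bound:
  assumes "m \<in> partition_mults j"
  shows "m k \<le> j \<and> (k \<notin> {1..j} \<longrightarrow> m k = 0)"
proof -
  have s: "(\<Sum>i=1..j. i * m i) = j" and sup: "\<And>i. m i \<noteq> 0 \<Longrightarrow> 1 \<le> i \<and> i \<le> j"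
    using assms unfolding partition_mults_def by auto
  have "m k \<le> j"
  proof (cases "m k = 0")
    case False
    then have k: "k \<in> {1..j}" using sup by auto
    have "k * m k \<le> (\<Sum>i=1..j. i * m i)" using k by (intro member_le_sum) auto
    then have "k * m k \<le> j" using s by simp
    moreover have "1 * m k \<le> k * m k" using k by (intro mult_le_mono1) auto
    ultimately show ?thesis by (metis le_trans mult_1)
  qed simp
  then show ?thesis using sup by force
qed

lemma finite_partition_mults: "finite (partition_mults j)"
proof -
  have "partition_mults j \<subseteq> {m :: nat \<Rightarrow> nat. (\<forall>k. k \<notin> {1..j} \<longrightarrow> m k = 0) \<and> (\<forall>k. m k \<le> j)}"
    using pm_bound by blast
  then show ?thesis using finite_bounded_funs[of "{1..j}" j] finite_subset by blast
qed

lemma finite_Tset: "finite (Tset s n)"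
proof -
  have "t i \<le> n" if t: "t \<in> Tset s n" for t i
  proof (cases "i \<in> {1..s}")
    case True
    have "t i \<le> (\<Sum>i=1..s. t i)" using True by (intro member_le_sum) auto
    then show ?thesis using t unfolding Tset_def by simp
  next
    case False then show ?thesis using t unfolding Tset_def by simp
  qed
  then have "Tset s n \<subseteq> {m :: nat \<Rightarrow> nat. (\<forall>k. k \<notin> {1..s} \<longrightarrow> m k = 0) \<and> (\<forall>k. m k \<le> n)}"
    unfolding Tset_def by blast
  then show ?thesis using finite_bounded_funs[of "{1..s}" n] finite_subset by blast
qed

lemma pm_zero: "m \<in> partition_mults j \<Longrightarrow> m 0 = 0"
  using pm_bound[of m j 0] by simp

lemma sum_V:
  assumes e: "bij_betw e {1..s} CL"
  shows "(\<Sum>v\<in>{1..n} \<times> CL. T v) = (\<Sum>i=1..s. \<Sum>k=1..n. T (k, e i))"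
proof -
  have "(\<Sum>v\<in>{1..n} \<times> CL. T v) = (\<Sum>k=1..n. \<Sum>C\<in>CL. T (k, C))"
    by (simp add: sum.cartesian_product)
  also have "\<dots> = (\<Sum>C\<in>CL. \<Sum>k=1..n. T (k, C))" by (rule sum.swap)
  also have "\<dots> = (\<Sum>i=1..s. \<Sum>k=1..n. T (k, e i))"
    using sum.reindex_bij_betw[OF e, of "\<lambda>C. \<Sum>k=1..n. T (k, C)"] by simp
  finally show ?thesis .
qed

lemma sum_trunc:
  fixes g :: "nat \<Rightarrow> nat"
  assumes "j \<le> n" "\<And>k. k \<in> {1..n} \<Longrightarrow> g k \<noteq> 0 \<Longrightarrow> k \<le> j"
  shows "(\<Sum>k=1..j. g k) = (\<Sum>k=1..n. g k)"
proof (rule sum.mono_neutral_left)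
  show "\<forall>i\<in>{1..n} - {1..j}. g i = 0"
  proof
    fix i assume i: "i \<in> {1..n} - {1..j}"
    show "g i = 0"
    proof (rule ccontr)
      assume "g i \<noteq> 0"
      then have "i \<le> j" using assms(2) i by blast
      then show False using i by auto
    qed
  qed
qed (use assms in auto)

lemma dvd_div_helper: "a * b dvd (c::nat) \<Longrightarrow> 0 < b \<Longrightarrow> a dvd c div b"
proof -
  assume "a * b dvd c" "0 < b"
  then obtain q where "c = a * b * q" by blast
  then have "c div b = a * q" using \<open>0 < b\<close> by (simp add: mult.commute mult.left_commute)
  then show ?thesis by simp
qed

locale comb =
  fixes G :: "('a, 'b) monoid_scheme" and r d s n :: nat and e :: "nat \<Rightarrow> 'a set"
  assumes fin: "finite (conj_classes G)" and e: "bij_betw e {1..s} (conj_classes G)"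
    and ed: "\<And>i. i \<in> {1..s} \<Longrightarrow> (i \<le> d \<longleftrightarrow> \<not> is_rth_power_class G r (e i))"
    and rpos: "0 < r"
begin

definition Th :: "(nat \<times> 'a set \<Rightarrow> nat) \<Rightarrow> (nat \<Rightarrow> nat) \<times> (nat \<Rightarrow> nat \<Rightarrow> nat)" where
  "Th T = ((\<lambda>i. if i \<in> {1..s} then \<Sum>k=1..n. T (k, e i) else 0), (\<lambda>i\<in>{1..s}. \<lambda>k. T (k, e i) div k))"

definition Ps :: "(nat \<Rightarrow> nat) \<times> (nat \<Rightarrow> nat \<Rightarrow> nat) \<Rightarrow> nat \<times> 'a set \<Rightarrow> nat" where
  "Ps p = (\<lambda>(k, C). if C \<in> conj_classes G then k * snd p (inv_into {1..s} e C) k else 0)"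

abbreviation "AA \<equiv> {T \<in> adm G n. wcond G r T}"
abbreviation "SS \<equiv> Sigma (Tset s n) (\<lambda>t. PiE {1..s} (\<lambda>i. Pset r d i (t i)))"

lemma e_in: "i \<in> {1..s} \<Longrightarrow> e i \<in> conj_classes G"
  by (rule bij_betw_apply[OF e])

lemma einv: "C \<in> conj_classes G \<Longrightarrow> inv_into {1..s} e C \<in> {1..s} \<and> e (inv_into {1..s} e C) = C"
proof -
  assume C: "C \<in> conj_classes G"
  have "C \<in> e ` {1..s}" using e C by (simp add: bij_betw_def)
  then show ?thesis using inv_into_into[of C e "{1..s}"] f_inv_into_f[of C e "{1..s}"] by simp
qed

lemma inve: "i \<in> {1..s} \<Longrightarrow> inv_into {1..s} e (e i) = i"
  by (rule bij_betw_inv_into_left[OF e])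

lemma sumV: "(\<Sum>v\<in>{1..n} \<times> conj_classes G. T v) = (\<Sum>i=1..s. \<Sum>k=1..n. T (k, e i))"
  using sum_V[OF e] .

lemma row_le:
  assumes T: "T \<in> adm G n" and i: "i \<in> {1..s}"
  shows "(\<Sum>k=1..n. T (k, e i)) \<le> n"
proof -
  have "(\<Sum>k=1..n. T (k, e i)) \<le> (\<Sum>i=1..s. \<Sum>k=1..n. T (k, e i))"
    using i by (intro member_le_sum) auto
  moreover have "(\<Sum>i=1..s. \<Sum>k=1..n. T (k, e i)) = n" using T sumV[of T] unfolding adm_def by simp
  ultimately show ?thesis by simp
qed

lemma entry_le:
  assumes T: "T \<in> adm G n" and nz: "T (k, e i) \<noteq> 0"
  shows "k \<le> T (k, e i) \<and> T (k, e i) \<le> (\<Sum>k=1..n. T (k, e i))"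
proof -
  have k: "1 \<le> k \<and> k \<le> n" using T nz unfolding adm_def by auto
  have "k dvd T (k, e i)" using T unfolding adm_def by auto
  then have "k \<le> T (k, e i)" using nz by (simp add: dvd_imp_le)
  moreover have "T (k, e i) \<le> (\<Sum>k=1..n. T (k, e i))" using k by (intro member_le_sum) auto
  ultimately show ?thesis by simp
qed

lemma Th_in:
  assumes TA: "T \<in> AA"
  shows "Th T \<in> SS"
proof -
  have T: "T \<in> adm G n" and cT: "wcond G r T" using TA by auto
  let ?t = "fst (Th T)" and ?M = "snd (Th T)"
  have t: "?t \<in> Tset s n"
    unfolding Tset_def Th_def using T sumV[of T] unfolding adm_def by simp
  have M: "?M i \<in> Pset r d i (?t i)" if i: "i \<in> {1..s}" for i
  proof -
    let ?row = "\<Sum>k=1..n. T (k, e i)"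
    have ti: "?t i = ?row" using i unfolding Th_def by simp
    have Mi: "?M i = (\<lambda>k. T (k, e i) div k)" using i unfolding Th_def by simp
    have dv: "k dvd T (k, e i)" for k using T unfolding adm_def by auto
    have sup: "1 \<le> k \<and> k \<le> ?row" if "T (k, e i) div k \<noteq> 0" for k
    proof -
      have nz: "T (k, e i) \<noteq> 0"
      proof
        assume "T (k, e i) = 0" then show False using that by simp
      qed
      then show ?thesis using entry_le[OF T nz] T unfolding adm_def by auto
    qed
    have "(\<Sum>k=1..?row. k * (T (k, e i) div k)) = (\<Sum>k=1..?row. T (k, e i))"
      using dv by (intro sum.cong) (auto simp: dvd_mult_div_cancel)
    also have "\<dots> = ?row"
    proof (rule sum_trunc)
      show "?row \<le> n" using row_le[OF T i] .
      show "\<And>k. k \<in> {1..n} \<Longrightarrow> T (k, e i) \<noteq> 0 \<Longrightarrow> k \<le> ?row"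
        using entry_le[OF T] by (meson le_trans)
    qed
    finally have pm: "(\<lambda>k. T (k, e i) div k) \<in> partition_mults ?row"
      unfolding partition_mults_def using sup by auto
    have cond: "if i \<le> d then (\<forall>k\<ge>1. r dvd T (k, e i) div k)
                else (\<forall>k\<ge>1. r dvd T (r * k, e i) div (r * k))"
    proof (cases "i \<le> d")
      case True
      then have "\<not> is_rth_power_class G r (e i)" using ed[OF i] by simp
      then have "r * k dvd T (k, e i)" for k using cT unfolding wcond_def by blast
      then show ?thesis using True dvd_div_helper by simp
    next
      case False
      then have "is_rth_power_class G r (e i)" using ed[OF i] by simp
      have "r * (r * k) dvd T (r * k, e i)" for k using cT unfolding wcond_def by simp
      moreover have "0 < r * k" if "k \<ge> 1" for k using rpos that by simp
      ultimately show ?thesis using False dvd_div_helper by simp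
    qed
    show ?thesis unfolding Pset_def Mi ti using pm cond by simp
  qed
  have "?M \<in> PiE {1..s} (\<lambda>i. Pset r d i (?t i))"
    using M unfolding Th_def by (auto simp: restrict_PiE_iff)
  then show ?thesis using t by (cases "Th T") auto
qed

lemma Ps_in:
  assumes p: "p \<in> SS"
  shows "Ps p \<in> AA"
proof -
  obtain t M where pe: "p = (t, M)" by (cases p)
  have t: "t \<in> Tset s n" and M: "M \<in> PiE {1..s} (\<lambda>i. Pset r d i (t i))" using p pe by auto
  have Mi: "M i \<in> Pset r d i (t i)" if "i \<in> {1..s}" for i using M that by auto
  have pmi: "M i \<in> partition_mults (t i)" if "i \<in> {1..s}" for i using Mi[OF that] unfolding Pset_def by auto
  have tle: "t i \<le> n" if i: "i \<in> {1..s}" for i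
  proof -
    have "t i \<le> (\<Sum>i=1..s. t i)" using i by (intro member_le_sum) auto
    then show ?thesis using t unfolding Tset_def by simp
  qed
  let ?T = "Ps p"
  have TC: "?T (k, C) = (if C \<in> conj_classes G then k * M (inv_into {1..s} e C) k else 0)" for k C
    unfolding Ps_def pe by simp
  have Tei: "?T (k, e i) = k * M i k" if i: "i \<in> {1..s}" for i k
    using TC e_in[OF i] inve[OF i] by simp
  have supp: "1 \<le> k \<and> k \<le> n \<and> C \<in> conj_classes G" if nz: "?T (k, C) \<noteq> 0" for k C
  proof -
    have C: "C \<in> conj_classes G" using nz TC by (cases "C \<in> conj_classes G") auto
    let ?i = "inv_into {1..s} e C"
    have i: "?i \<in> {1..s}" using einv[OF C] by simp
    have "M ?i k \<noteq> 0" using nz TC C by auto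
    then have "1 \<le> k \<and> k \<le> t ?i" using pm_bound[OF pmi[OF i], of k] by auto
    then show ?thesis using tle[OF i] C by simp
  qed
  have rowsum: "(\<Sum>k=1..n. k * M i k) = t i" if i: "i \<in> {1..s}" for i
  proof -
    have "(\<Sum>k=1..t i. k * M i k) = (\<Sum>k=1..n. k * M i k)"
    proof (rule sum_trunc)
      show "t i \<le> n" using tle[OF i] .
      show "\<And>k. k \<in> {1..n} \<Longrightarrow> k * M i k \<noteq> 0 \<Longrightarrow> k \<le> t i"
        using pm_bound[OF pmi[OF i]] by fastforce
    qed
    moreover have "(\<Sum>k=1..t i. k * M i k) = t i" using pmi[OF i] unfolding partition_mults_def by simp
    ultimately show ?thesis by simp
  qed
  have sum: "(\<Sum>v\<in>{1..n} \<times> conj_classes G. ?T v) = n"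
  proof -
    have "(\<Sum>v\<in>{1..n} \<times> conj_classes G. ?T v) = (\<Sum>i=1..s. \<Sum>k=1..n. ?T (k, e i))" using sumV .
    also have "\<dots> = (\<Sum>i=1..s. t i)" using Tei rowsum by (intro sum.cong) auto
    also have "\<dots> = n" using t unfolding Tset_def by simp
    finally show ?thesis .
  qed
  have dv: "k dvd ?T (k, C)" for k C using TC by simp
  have cond: "wcond G r ?T"
    unfolding wcond_def
  proof (intro allI impI)
    fix k C assume kc: "\<not> is_rth_power_class G r C \<or> r dvd k"
    show "r * k dvd ?T (k, C)"
    proof (cases "C \<in> conj_classes G \<and> k \<noteq> 0")
      case False then show ?thesis using TC by auto
    next
      case True
      then have C: "C \<in> conj_classes G" and k: "1 \<le> k" by auto
      let ?i = "inv_into {1..s} e C"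
      have i: "?i \<in> {1..s}" and ei: "e ?i = C" using einv[OF C] by auto
      have Ti: "?T (k, C) = k * M ?i k" using TC C by simp
      have cnd: "if ?i \<le> d then (\<forall>k\<ge>1. r dvd M ?i k) else (\<forall>k\<ge>1. r dvd M ?i (r * k))"
        using Mi[OF i] unfolding Pset_def by simp
      show ?thesis
      proof (cases "?i \<le> d")
        case True
        then have "r dvd M ?i k" using cnd k by simp
        then show ?thesis using Ti by simp
      next
        case False
        then have "is_rth_power_class G r C" using ed[OF i] ei by simp
        then have "r dvd k" using kc by simp
        then obtain k' where k': "k = r * k'" by blast
        have "1 \<le> k'" using k k' by (cases k') auto
        then have "r dvd M ?i k" using cnd False k' by simp
        then show ?thesis using Ti by simp
      qed
    qed
  qed
  show ?thesis unfolding adm_def using supp dv sum cond by simp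
qed

lemma Ps_Th:
  assumes TA: "T \<in> AA"
  shows "Ps (Th T) = T"
proof (rule ext)
  fix v :: "nat \<times> 'a set"
  obtain k C where v: "v = (k, C)" by (cases v)
  have T: "T \<in> adm G n" using TA by simp
  show "Ps (Th T) v = T v"
  proof (cases "C \<in> conj_classes G")
    case True
    let ?i = "inv_into {1..s} e C"
    have i: "?i \<in> {1..s}" and ei: "e ?i = C" using einv[OF True] by auto
    have "k dvd T (k, C)" using T unfolding adm_def by auto
    then show ?thesis unfolding Ps_def Th_def v using True i ei by (simp add: dvd_mult_div_cancel)
  next
    case False
    then have "T (k, C) = 0" using T unfolding adm_def by auto
    then show ?thesis unfolding Ps_def Th_def v using False by simp
  qed
qed

lemma Th_Ps:
  assumes p: "p \<in> SS"
  shows "Th (Ps p) = p"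
proof -
  obtain t M where pe: "p = (t, M)" by (cases p)
  have t: "t \<in> Tset s n" and M: "M \<in> PiE {1..s} (\<lambda>i. Pset r d i (t i))" using p pe by auto
  have pmi: "M i \<in> partition_mults (t i)" if "i \<in> {1..s}" for i
    using M that unfolding Pset_def by auto
  have tle: "t i \<le> n" if i: "i \<in> {1..s}" for i
  proof -
    have "t i \<le> (\<Sum>i=1..s. t i)" using i by (intro member_le_sum) auto
    then show ?thesis using t unfolding Tset_def by simp
  qed
  have Tei: "Ps p (k, e i) = k * M i k" if i: "i \<in> {1..s}" for i k
    unfolding Ps_def pe using e_in[OF i] inve[OF i] by simp
  have rowsum: "(\<Sum>k=1..n. k * M i k) = t i" if i: "i \<in> {1..s}" for i
  proof -
    have "(\<Sum>k=1..t i. k * M i k) = (\<Sum>k=1..n. k * M i k)"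
    proof (rule sum_trunc)
      show "t i \<le> n" using tle[OF i] .
      show "\<And>k. k \<in> {1..n} \<Longrightarrow> k * M i k \<noteq> 0 \<Longrightarrow> k \<le> t i"
        using pm_bound[OF pmi[OF i]] by fastforce
    qed
    moreover have "(\<Sum>k=1..t i. k * M i k) = t i" using pmi[OF i] unfolding partition_mults_def by simp
    ultimately show ?thesis by simp
  qed
  have f: "fst (Th (Ps p)) = t"
  proof
    fix i show "fst (Th (Ps p)) i = t i"
    proof (cases "i \<in> {1..s}")
      case True
      then show ?thesis unfolding Th_def using Tei rowsum by simp
    next
      case False
      then show ?thesis unfolding Th_def using t unfolding Tset_def by auto
    qed
  qed
  have g: "snd (Th (Ps p)) = M"
  proof
    fix i show "snd (Th (Ps p)) i = M i"
    proof (cases "i \<in> {1..s}")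
      case True
      have "(\<lambda>k. Ps p (k, e i) div k) = M i"
      proof
        fix k show "Ps p (k, e i) div k = M i k"
        proof (cases "k = 0")
          case True
          then show ?thesis using pm_zero[OF pmi[OF \<open>i \<in> {1..s}\<close>]] by simp
        next
          case False
          then show ?thesis using Tei[OF \<open>i \<in> {1..s}\<close>, of k] by simp
        qed
      qed
      then show ?thesis unfolding Th_def using True by simp
    next
      case False
      then show ?thesis unfolding Th_def using PiE_arb[OF M False] by auto
    qed
  qed
  have "Th (Ps p) = (fst (Th (Ps p)), snd (Th (Ps p)))" by (rule prod.collapse[symmetric])
  also have "\<dots> = (t, M)" by (simp only: f g)
  finally show ?thesis using pe by simp
qed

lemma card_AA: "card AA = card SS"
proof -
  have "bij_betw Th AA SS"
  proof (rule bij_betw_byWitness[where f' = Ps])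
    show "\<forall>a\<in>AA. Ps (Th a) = a" by (intro ballI Ps_Th)
    show "\<forall>a'\<in>SS. Th (Ps a') = a'" by (intro ballI Th_Ps)
    show "Th ` AA \<subseteq> SS" by (rule image_subsetI) (rule Th_in)
    show "Ps ` SS \<subseteq> AA" by (rule image_subsetI) (rule Ps_in)
  qed
  then show ?thesis by (rule bij_betw_same_card)
qed

lemma card_SS:
  "card SS = (\<Sum>t\<in>Tset s n. \<Prod>i\<in>{1..s}. card (Pset r d i (t i)))"
proof -
  have finP: "finite (Pset r d i j)" for i j
    using finite_partition_mults[of j] unfolding Pset_def by simp
  have "card SS = (\<Sum>t\<in>Tset s n. card (PiE {1..s} (\<lambda>i. Pset r d i (t i))))"
    using finite_Tset finP by (intro card_SigmaI) (auto intro: finite_PiE)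
  also have "\<dots> = (\<Sum>t\<in>Tset s n. \<Prod>i\<in>{1..s}. card (Pset r d i (t i)))"
    by (intro sum.cong refl card_PiE) simp
  finally show ?thesis .
qed

end

lemma enum_classes:
  fixes CL :: "'c set" and P :: "'c \<Rightarrow> bool"
  assumes fin: "finite CL" and s: "s = card CL" and d: "d = card {C \<in> CL. \<not> P C}"
  shows "\<exists>e. bij_betw e {1..s} CL \<and> (\<forall>i\<in>{1..s}. (i \<le> d \<longleftrightarrow> \<not> P (e i))) \<and> d \<le> s"
proof -
  let ?NR = "{C \<in> CL. \<not> P C}" and ?R = "{C \<in> CL. P C}"
  have fNR: "finite ?NR" and fR: "finite ?R" using fin by auto
  have un: "?NR \<union> ?R = CL" and di: "?NR \<inter> ?R = {}" by auto
  have cs: "card CL = card ?NR + card ?R" using card_Un_disjoint[OF fNR fR di] un by simp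
  have ds: "d \<le> s" using cs s d by simp
  have cR: "card ?R = s - d" using cs s d by simp
  obtain e1 where e1: "bij_betw e1 {1..d} ?NR" using ex_bij_betw_nat_finite_1[OF fNR] d by auto
  obtain e2 where e2: "bij_betw e2 {1..s - d} ?R" using ex_bij_betw_nat_finite_1[OF fR] cR by auto
  define e where "e i = (if i \<le> d then e1 i else e2 (i - d))" for i
  have b1: "bij_betw e {1..d} ?NR" using e1 by (rule bij_betw_cong[THEN iffD1, rotated]) (simp add: e_def)
  have sh: "bij_betw (\<lambda>i. i - d) {d+1..s} {1..s - d}"
    by (rule bij_betw_byWitness[where f' = "\<lambda>j. j + d"]) auto
  have "bij_betw (e2 \<circ> (\<lambda>i. i - d)) {d+1..s} ?R" using bij_betw_trans[OF sh e2] .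
  then have b2: "bij_betw e {d+1..s} ?R"
    by (rule bij_betw_cong[THEN iffD1, rotated]) (simp add: e_def)
  have "bij_betw e ({1..d} \<union> {d+1..s}) (?NR \<union> ?R)" using bij_betw_combine[OF b1 b2 di] .
  moreover have "{1..d} \<union> {d+1..s} = {1..s}" using ds by auto
  ultimately have b: "bij_betw e {1..s} CL" using un by simp
  have "(i \<le> d \<longleftrightarrow> \<not> P (e i))" if i: "i \<in> {1..s}" for i
  proof (cases "i \<le> d")
    case True
    then have "e i \<in> ?NR" using bij_betw_apply[OF b1] i by simp
    then show ?thesis using True by simp
  next
    case False
    then have "i \<in> {d+1..s}" using i by simp
    then have "e i \<in> ?R" using bij_betw_apply[OF b2] by blast
    then show ?thesis using False by simp
  qed
  then show ?thesis using b ds by blast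
qed

theorem theorem5p9:
  fixes G :: "('a, 'b) monoid_scheme" and r n s d :: nat
  assumes "prime r"
    and "group G" and "finite (carrier G)"
    and "s = card (conj_classes G)"
    and "d = card {C \<in> conj_classes G. \<not> is_rth_power_class G r C}"
  shows "CC r (wreath G n) =
    (\<Sum>t \<in> {t :: nat \<Rightarrow> nat. (\<forall>i. i \<notin> {1..s} \<longrightarrow> t i = 0) \<and> (\<Sum>i=1..s. t i) = n}.
       (\<Prod>i=1..d. p_r r (t i)) * (\<Prod>i=d+1..s. p_r' r (t i)))"
proof -
  interpret group G by (rule assms(2))
  have fin: "finite (carrier G)" using assms(3) .
  have r: "prime r" using assms(1) .
  have fcl: "finite (conj_classes G)" using finite_conj_classes[OF fin] .
  obtain e where e: "bij_betw e {1..s} (conj_classes G)"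
    and ed: "\<forall>i\<in>{1..s}. (i \<le> d \<longleftrightarrow> \<not> is_rth_power_class G r (e i))" and ds: "d \<le> s"
    using enum_classes[OF fcl assms(4) assms(5)] by blast
  interpret comb G r d s n e
    using fcl e ed prime_gt_0_nat[OF r] by unfold_locales auto
  have "CC r (wreath G n) = card {T \<in> adm G n. wcond G r T}" using CC_eq[OF assms(3) assms(1)] .
  also have "\<dots> = (\<Sum>t\<in>Tset s n. \<Prod>i\<in>{1..s}. card (Pset r d i (t i)))"
    using card_AA card_SS by simp
  also have "\<dots> = (\<Sum>t\<in>Tset s n. (\<Prod>i=1..d. p_r r (t i)) * (\<Prod>i=d+1..s. p_r' r (t i)))"
  proof (rule sum.cong[OF refl])
    fix t
    have un: "{1..s} = {1..d} \<union> {d+1..s}" using ds by auto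
    have "(\<Prod>i\<in>{1..s}. card (Pset r d i (t i))) =
        (\<Prod>i\<in>{1..d}. card (Pset r d i (t i))) * (\<Prod>i\<in>{d+1..s}. card (Pset r d i (t i)))"
      unfolding un by (rule prod.union_disjoint) auto
    also have "(\<Prod>i\<in>{1..d}. card (Pset r d i (t i))) = (\<Prod>i=1..d. p_r r (t i))"
      by (rule prod.cong[OF refl]) (simp add: Pset_def p_r_def)
    also have "(\<Prod>i\<in>{d+1..s}. card (Pset r d i (t i))) = (\<Prod>i=d+1..s. p_r' r (t i))"
      by (rule prod.cong[OF refl]) (simp add: Pset_def p_r'_def)
    finally show "(\<Prod>i\<in>{1..s}. card (Pset r d i (t i))) = (\<Prod>i=1..d. p_r r (t i)) * (\<Prod>i=d+1..s. p_r' r (t i))" .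
  qed
  finally show ?thesis unfolding Tset_def .
qed

end
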